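(* Let $G$ be a torsion-free group acting $\kappa$-acylindrically on a simplicial tree $T$, let $X$ be a graph with an isometric $G$-action, and let $\pi:X\to T$ be a $G$-equivariant $1$-Lipschitz map. Let $g,h\in G$ be loxodromic for the action on $T$, with axes $\alpha_g,\alpha_h$, and suppose $g$ and $h$ have no common nontrivial power. Choose a vertex $x_0\in\pi^{-1}(\alpha_g)$ with $d_X(gx_0,x_0)=\min\{d_X(gx,x): x\in\pi^{-1}(\alpha_g)\}$, choose a vertex $y_0\in\pi^{-1}(\alpha_h)$, and set $A(g)=\{g^nx_0\}_{n\in\mathbf{Z}}$ and $A(h)=\{h^ny_0\}_{n\in\mathbf{Z}}$. Then for each $\epsilon>0$ there is a constant $K$, depending only on $\epsilon$, $\kappa$ and the conjugacy classes of $g$ and $h$, such that $\mathrm{diam}_X(N_\epsilon(A(g))\cap A(h))\le K$.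
   Context: An action on a simplicial tree is $\kappa$-acylindrical if the pointwise stabiliser of every edge path of length at least $\kappa+1$ is trivial. The axis $\alpha_g$ of a loxodromic $g$ is its invariant bi-infinite geodesic. $N_\epsilon(\cdot)$ denotes the closed $\epsilon$-neighbourhood in $X$. Common nontrivial power: $g^m=h^n\neq1$ for some integers $m,n$. *)

theory Defs
  imports Complex_Main "HOL-Algebra.Group_Action" "HOL-Library.Extended_Real"
begin

text \<open>Graphs are given by an adjacency relation on a vertex type (all of the type).\<close>

definition is_walk :: "('v \<Rightarrow> 'v \<Rightarrow> bool) \<Rightarrow> 'v list \<Rightarrow> bool" where
  "is_walk E xs \<longleftrightarrow> xs \<noteq> [] \<and> (\<forall>i. Suc i < length xs \<longrightarrow> E (xs ! i) (xs ! Suc i))"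

definition gconnected :: "('v \<Rightarrow> 'v \<Rightarrow> bool) \<Rightarrow> bool" where
  "gconnected E \<longleftrightarrow> (\<forall>x y. \<exists>xs. is_walk E xs \<and> hd xs = x \<and> last xs = y)"

text \<open>Combinatorial (path) distance between vertices; equals the distance in the
  metric graph between vertices.\<close>
definition gdist :: "('v \<Rightarrow> 'v \<Rightarrow> bool) \<Rightarrow> 'v \<Rightarrow> 'v \<Rightarrow> nat" where
  "gdist E x y = (LEAST n. \<exists>xs. is_walk E xs \<and> hd xs = x \<and> last xs = y \<and> length xs = Suc n)"

definition sym_graph :: "('v \<Rightarrow> 'v \<Rightarrow> bool) \<Rightarrow> bool" where
  "sym_graph E \<longleftrightarrow> (\<forall>x y. E x y \<longrightarrow> E y x)"

definition simplicial_tree :: "('v \<Rightarrow> 'v \<Rightarrow> bool) \<Rightarrow> bool" where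
  "simplicial_tree E \<longleftrightarrow> sym_graph E \<and> (\<forall>x. \<not> E x x) \<and> gconnected E \<and>
     \<not> (\<exists>xs. is_walk E xs \<and> distinct xs \<and> 3 \<le> length xs \<and> E (last xs) (hd xs))"

definition graph_aut_action :: "('g, 'm) monoid_scheme \<Rightarrow> ('g \<Rightarrow> 'v \<Rightarrow> 'v) \<Rightarrow> ('v \<Rightarrow> 'v \<Rightarrow> bool) \<Rightarrow> bool" where
  "graph_aut_action G \<phi> E \<longleftrightarrow> group_action G UNIV \<phi> \<and>
     (\<forall>g\<in>carrier G. \<forall>u v. E (\<phi> g u) (\<phi> g v) \<longleftrightarrow> E u v)"

text \<open>kappa-acylindricity: pointwise stabiliser of every (reduced) edge path of length
  at least kappa+1 (i.e. at least kappa+2 vertices) is trivial.\<close>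
definition acylindrical :: "('g, 'm) monoid_scheme \<Rightarrow> ('g \<Rightarrow> 'v \<Rightarrow> 'v) \<Rightarrow> ('v \<Rightarrow> 'v \<Rightarrow> bool) \<Rightarrow> nat \<Rightarrow> bool" where
  "acylindrical G \<phi> E \<kappa> \<longleftrightarrow>
     (\<forall>xs. is_walk E xs \<and> distinct xs \<and> \<kappa> + 2 \<le> length xs \<longrightarrow>
        (\<forall>g\<in>carrier G. (\<forall>v\<in>set xs. \<phi> g v = v) \<longrightarrow> g = \<one>\<^bsub>G\<^esub>))"

definition torsion_free :: "('g, 'm) monoid_scheme \<Rightarrow> bool" where
  "torsion_free G \<longleftrightarrow> (\<forall>x\<in>carrier G. x \<noteq> \<one>\<^bsub>G\<^esub> \<longrightarrow> (\<forall>n::nat. 0 < n \<longrightarrow> x [^]\<^bsub>G\<^esub> n \<noteq> \<one>\<^bsub>G\<^esub>))"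

text \<open>Geometric realization of a graph: points are given by barycentric coordinates,
  supported on a vertex or on an edge.\<close>
definition realization :: "('v \<Rightarrow> 'v \<Rightarrow> bool) \<Rightarrow> ('v \<Rightarrow> real) set" where
  "realization E = {f. (\<exists>u. f = (\<lambda>w. if w = u then 1 else 0)) \<or>
      (\<exists>u v t. E u v \<and> 0 < t \<and> t < 1 \<and> f = (\<lambda>w. if w = u then 1 - t else if w = v then t else 0))}"

definition supp :: "('v \<Rightarrow> real) \<Rightarrow> 'v set" where
  "supp f = {w. f w \<noteq> 0}"

text \<open>Path metric of the realization (of a tree): for points in a common closed edge it
  is the difference of positions, otherwise geodesics leave through endpoints.\<close>
definition tdist :: "('v \<Rightarrow> 'v \<Rightarrow> bool) \<Rightarrow> ('v \<Rightarrow> real) \<Rightarrow> ('v \<Rightarrow> real) \<Rightarrow> real" where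
  "tdist E f g =
     (if \<exists>u v. (u = v \<or> E u v) \<and> supp f \<subseteq> {u, v} \<and> supp g \<subseteq> {u, v}
      then (\<Sum>w\<in>supp f \<union> supp g. \<bar>f w - g w\<bar>) / 2
      else Min {(1 - f a) + real (gdist E a b) + (1 - g b) | a b. a \<in> supp f \<and> b \<in> supp g})"

definition act_pt :: "('g, 'm) monoid_scheme \<Rightarrow> ('g \<Rightarrow> 'v \<Rightarrow> 'v) \<Rightarrow> 'g \<Rightarrow> ('v \<Rightarrow> real) \<Rightarrow> ('v \<Rightarrow> real)" where
  "act_pt G \<phi> g f = (\<lambda>w. f (\<phi> (inv\<^bsub>G\<^esub> g) w))"

definition bi_infinite_geodesic :: "('v \<Rightarrow> 'v \<Rightarrow> bool) \<Rightarrow> ('v \<Rightarrow> real) set \<Rightarrow> bool" where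
  "bi_infinite_geodesic E A \<longleftrightarrow>
     (\<exists>\<gamma>::real \<Rightarrow> ('v \<Rightarrow> real). (\<forall>s. \<gamma> s \<in> realization E) \<and>
        (\<forall>s t. tdist E (\<gamma> s) (\<gamma> t) = \<bar>s - t\<bar>) \<and> A = range \<gamma>)"

definition loxodromic :: "('g, 'm) monoid_scheme \<Rightarrow> ('g \<Rightarrow> 'v \<Rightarrow> 'v) \<Rightarrow> ('v \<Rightarrow> 'v \<Rightarrow> bool) \<Rightarrow> 'g \<Rightarrow> bool" where
  "loxodromic G \<phi> E g \<longleftrightarrow> (INF p\<in>realization E. tdist E p (act_pt G \<phi> g p)) > 0"

definition is_axis :: "('g, 'm) monoid_scheme \<Rightarrow> ('g \<Rightarrow> 'v \<Rightarrow> 'v) \<Rightarrow> ('v \<Rightarrow> 'v \<Rightarrow> bool) \<Rightarrow> 'g \<Rightarrow> ('v \<Rightarrow> real) set \<Rightarrow> bool" where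
  "is_axis G \<phi> E g A \<longleftrightarrow> bi_infinite_geodesic E A \<and> act_pt G \<phi> g ` A = A"

definition graph_diam :: "('v \<Rightarrow> 'v \<Rightarrow> bool) \<Rightarrow> 'v set \<Rightarrow> ereal" where
  "graph_diam E S = (SUP x\<in>S. SUP y\<in>S. ereal (real (gdist E x y)))"

end

theory Submission
  imports Defs
begin

section \<open>Walks\<close>

lemma is_walk_Cons:
  "is_walk E (x # xs) \<longleftrightarrow> (xs = [] \<or> (E x (hd xs) \<and> is_walk E xs))"
proof (cases xs)
  case Nil
  then show ?thesis by (simp add: is_walk_def)
next
  case (Cons y ys)
  show ?thesis
  proof
    assume H: "is_walk E (x # xs)"
    have "E x y" using H[unfolded is_walk_def, THEN conjunct2, rule_format, of 0] Cons by simp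
    moreover have "is_walk E xs"
      unfolding is_walk_def
    proof (intro conjI allI impI)
      show "xs \<noteq> []" using Cons by simp
      fix i assume "Suc i < length xs"
      then show "E (xs ! i) (xs ! Suc i)"
        using H[unfolded is_walk_def, THEN conjunct2, rule_format, of "Suc i"] by simp
    qed
    ultimately show "xs = [] \<or> (E x (hd xs) \<and> is_walk E xs)" using Cons by simp
  next
    assume H: "xs = [] \<or> (E x (hd xs) \<and> is_walk E xs)"
    then have H1: "E x y" and H2: "is_walk E xs" using Cons by auto
    show "is_walk E (x # xs)"
      unfolding is_walk_def
    proof (intro conjI allI impI)
      show "x # xs \<noteq> []" by simp
      fix i assume "Suc i < length (x # xs)"
      then show "E ((x # xs) ! i) ((x # xs) ! Suc i)"
        using H1 H2[unfolded is_walk_def] Cons by (cases i) auto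
    qed
  qed
qed

lemma is_walk_single[simp]: "is_walk E [x]"
  by (simp add: is_walk_def)

lemma is_walk_Cons2[simp]: "is_walk E (x # y # xs) \<longleftrightarrow> E x y \<and> is_walk E (y # xs)"
  by (simp add: is_walk_Cons)

lemma is_walk_append:
  assumes "is_walk E xs" "is_walk E ys" "E (last xs) (hd ys)"
  shows "is_walk E (xs @ ys)"
  using assms
proof (induction xs)
  case Nil
  then show ?case by (simp add: is_walk_def)
next
  case (Cons x xs)
  show ?case
  proof (cases "xs = []")
    case True
    then show ?thesis using Cons.prems by (simp add: is_walk_Cons)
  next
    case False
    then obtain z zs where Cons2: "xs = z # zs" by (metis list.exhaust)
    have "is_walk E xs" "E x z" using Cons.prems(1) Cons2 by (auto simp: is_walk_Cons)
    then have "is_walk E (xs @ ys)" using Cons.IH Cons.prems Cons2 by simp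
    then show ?thesis using \<open>E x z\<close> Cons2 by (simp add: is_walk_Cons)
  qed
qed

lemma is_walk_join:
  assumes "is_walk E xs" "is_walk E ys" "last xs = hd ys"
  shows "is_walk E (xs @ tl ys)"
proof (cases "tl ys")
  case Nil
  then show ?thesis using assms by simp
next
  case (Cons z zs)
  have "ys \<noteq> []" using assms(2) unfolding is_walk_def by simp
  then have ys: "ys = hd ys # z # zs" using Cons by (metis list.collapse)
  have "E (hd ys) z" "is_walk E (z # zs)" using assms(2) ys by (metis is_walk_Cons2)+
  then show ?thesis using assms Cons by (intro is_walk_append) auto
qed

lemma is_walk_rev:
  assumes "sym_graph E" "is_walk E xs"
  shows "is_walk E (rev xs)"
  using assms(2)
proof (induction xs)
  case Nil
  then show ?case by (simp add: is_walk_def)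
next
  case (Cons x xs)
  show ?case
  proof (cases "xs = []")
    case True
    then show ?thesis by simp
  next
    case False
    then obtain z zs where Cons2: "xs = z # zs" by (metis list.exhaust)
    have "is_walk E xs" "E x z" using Cons.prems Cons2 by (auto simp: is_walk_Cons)
    then have "is_walk E (rev xs)" using Cons.IH by simp
    moreover have "E (last (rev xs)) x" using \<open>E x z\<close> assms(1) Cons2
      by (simp add: sym_graph_def last_rev)
    ultimately show ?thesis by (simp add: is_walk_append)
  qed
qed

lemma is_walk_take:
  assumes "is_walk E xs" "0 < n"
  shows "is_walk E (take n xs)"
  using assms unfolding is_walk_def by auto

lemma is_walk_drop:
  assumes "is_walk E xs" "n < length xs"
  shows "is_walk E (drop n xs)"
  using assms unfolding is_walk_def by auto

lemma is_walk_map: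
  assumes "is_walk E xs" "\<And>u v. E u v \<Longrightarrow> E' (f u) (f v)"
  shows "is_walk E' (map f xs)"
  using assms unfolding is_walk_def by auto

lemma is_walk_map_upt:
  assumes "lo \<le> hi" "\<And>i. lo \<le> i \<Longrightarrow> i < hi \<Longrightarrow> E (f i) (f (Suc i))"
  shows "is_walk E (map f [lo..<Suc hi])"
  using assms
proof (induction hi)
  case 0
  then show ?case by simp
next
  case (Suc hi)
  show ?case
  proof (cases "lo = Suc hi")
    case True
    then show ?thesis by simp
  next
    case False
    then have "lo \<le> hi" using Suc.prems by simp
    then have W: "is_walk E (map f [lo..<Suc hi])" using Suc by simp
    have "map f [lo..<Suc (Suc hi)] = map f [lo..<Suc hi] @ [f (Suc hi)]"
      using \<open>lo \<le> hi\<close> by simp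
    moreover have "last (map f [lo..<Suc hi]) = f hi" using \<open>lo \<le> hi\<close>
      by (simp add: last_map)
    moreover have "E (f hi) (f (Suc hi))" using Suc.prems \<open>lo \<le> hi\<close> by simp
    ultimately show ?thesis using W by (metis is_walk_append is_walk_single list.sel(1))
  qed
qed

section \<open>Connected symmetric graphs\<close>

locale cgraph =
  fixes E :: "'v \<Rightarrow> 'v \<Rightarrow> bool"
  assumes symE: "sym_graph E" and conn: "gconnected E"
begin

abbreviation d where "d \<equiv> gdist E"

lemma E_sym: "E x y \<Longrightarrow> E y x"
  using symE unfolding sym_graph_def by blast

lemma d_le_walk:
  assumes "is_walk E xs" "hd xs = x" "last xs = y"
  shows "d x y \<le> length xs - 1"
proof -
  have "\<exists>xs'. is_walk E xs' \<and> hd xs' = x \<and> last xs' = y \<and> length xs' = Suc (length xs - 1)"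
    using assms by (intro exI[of _ xs]) (auto simp: is_walk_def)
  then show ?thesis unfolding gdist_def by (rule Least_le)
qed

lemma d_walk_ex:
  "\<exists>xs. is_walk E xs \<and> hd xs = x \<and> last xs = y \<and> length xs = Suc (d x y)"
proof -
  obtain xs where "is_walk E xs" "hd xs = x" "last xs = y" using conn unfolding gconnected_def by blast
  then have "\<exists>n xs. is_walk E xs \<and> hd xs = x \<and> last xs = y \<and> length xs = Suc n"
    by (intro exI[of _ "length xs - 1"] exI[of _ xs]) (auto simp: is_walk_def)
  then show ?thesis unfolding gdist_def by (rule LeastI_ex)
qed

lemma d_refl[simp]: "d x x = 0"
  using d_le_walk[of "[x]" x x] by simp

lemma d_eq_0: assumes "d x y = 0" shows "x = y"
proof -
  obtain xs where xs: "is_walk E xs" "hd xs = x" "last xs = y" "length xs = Suc (d x y)"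
    using d_walk_ex by blast
  then have "length xs = 1" using assms by simp
  then obtain a where "xs = [a]" by (metis One_nat_def length_0_conv length_Suc_conv)
  then show ?thesis using xs by simp
qed

lemma d_eq_0_iff[simp]: "d x y = 0 \<longleftrightarrow> x = y"
  using d_eq_0 by auto

lemma d_edge: "E x y \<Longrightarrow> d x y \<le> 1"
  using d_le_walk[of "[x, y]" x y] by simp

lemma d_one: assumes "d x y = 1" shows "E x y"
proof -
  obtain xs where xs: "is_walk E xs" "hd xs = x" "last xs = y" "length xs = Suc (d x y)"
    using d_walk_ex by blast
  then have "length xs = 2" using assms by simp
  then obtain a b where "xs = [a, b]" by (metis One_nat_def Suc_1 length_0_conv length_Suc_conv)
  then show ?thesis using xs by simp
qed

lemma d_tri: "d x z \<le> d x y + d y z"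
proof -
  obtain xs where xs: "is_walk E xs" "hd xs = x" "last xs = y" "length xs = Suc (d x y)"
    using d_walk_ex by blast
  obtain ys where ys: "is_walk E ys" "hd ys = y" "last ys = z" "length ys = Suc (d y z)"
    using d_walk_ex by blast
  have W: "is_walk E (xs @ tl ys)" using xs ys by (intro is_walk_join) auto
  have "hd (xs @ tl ys) = x" using xs by (cases xs) auto
  moreover have "last (xs @ tl ys) = z"
  proof (cases "tl ys = []")
    case True
    have "ys \<noteq> []" using ys(1) unfolding is_walk_def by simp
    then have "ys = [y]" using True ys(2) by (metis list.collapse)
    then show ?thesis using True xs ys by simp
  next
    case False
    then show ?thesis using ys by (simp add: last_tl)
  qed
  ultimately have "d x z \<le> length (xs @ tl ys) - 1" using W d_le_walk by blast
  then show ?thesis using xs ys by simp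
qed

lemma d_sym: "d x y = d y x"
proof -
  have "d y x \<le> d x y" for x y
  proof -
    obtain xs where xs: "is_walk E xs" "hd xs = x" "last xs = y" "length xs = Suc (d x y)"
      using d_walk_ex by blast
    have "is_walk E (rev xs)" using is_walk_rev[OF symE xs(1)] .
    moreover have "hd (rev xs) = y" "last (rev xs) = x" using xs
      by (auto simp: hd_rev last_rev)
    ultimately show ?thesis using d_le_walk[of "rev xs" y x] xs by simp
  qed
  then show ?thesis by (simp add: le_antisym)
qed

lemma d_hom:
  assumes "\<And>u v. E u v \<Longrightarrow> E (f u) (f v)"
  shows "d (f x) (f y) \<le> d x y"
proof -
  obtain xs where xs: "is_walk E xs" "hd xs = x" "last xs = y" "length xs = Suc (d x y)"
    using d_walk_ex by blast
  have "is_walk E (map f xs)" using is_walk_map[OF xs(1)] assms by blast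
  moreover have "hd (map f xs) = f x" "last (map f xs) = f y" using xs
    by (auto simp: hd_map last_map is_walk_def)
  ultimately show ?thesis using d_le_walk[of "map f xs"] xs by fastforce
qed

lemma d_pred:
  assumes "x \<noteq> w"
  shows "\<exists>y. E y x \<and> Suc (d w y) = d w x"
proof -
  obtain xs where xs: "is_walk E xs" "hd xs = w" "last xs = x" "length xs = Suc (d w x)"
    using d_walk_ex by blast
  have "d w x \<noteq> 0" using assms d_eq_0 by metis
  then obtain n where n: "d w x = Suc n" using not0_implies_Suc by blast
  define y where "y = xs ! n"
  have "Suc n < length xs" using n xs(4) by simp
  then have "E (xs ! n) (xs ! Suc n)" using xs(1) unfolding is_walk_def by blast
  moreover have "xs ! Suc n = x"
  proof -
    have "xs \<noteq> []" using xs(4) by auto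
    then have "last xs = xs ! (length xs - 1)" by (rule last_conv_nth)
    then show ?thesis using xs n by simp
  qed
  ultimately have "E y x" by (simp add: y_def)
  have "is_walk E (take (Suc n) xs)" using is_walk_take xs(1) by auto
  moreover have "hd (take (Suc n) xs) = w" using xs by (cases xs) auto
  moreover have "last (take (Suc n) xs) = y" using xs n unfolding y_def
    by (subst last_conv_nth) (auto simp: min_def)
  moreover have "length (take (Suc n) xs) = Suc n" using xs n by simp
  ultimately have "d w y \<le> n" using d_le_walk[of "take (Suc n) xs" w y] by simp
  moreover have "d w x \<le> d w y + 1" using d_tri[of w x y] d_edge[OF \<open>E y x\<close>] d_sym[of y x] by simp
  ultimately show ?thesis using \<open>E y x\<close> n by (intro exI[of _ y]) auto
qed

lemma d_geo_walk:
  "\<exists>xs. is_walk E xs \<and> hd xs = x \<and> last xs = y \<and> length xs = Suc (d x y) \<and>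
     (\<forall>i \<le> d x y. d x (xs ! i) = i \<and> d (xs ! i) y = d x y - i)"
proof -
  obtain xs where xs: "is_walk E xs" "hd xs = x" "last xs = y" "length xs = Suc (d x y)"
    using d_walk_ex by blast
  have "d x (xs ! i) = i \<and> d (xs ! i) y = d x y - i" if i: "i \<le> d x y" for i
  proof -
    have "is_walk E (take (Suc i) xs)" using is_walk_take xs(1) by auto
    moreover have "hd (take (Suc i) xs) = x" using xs by (cases xs) auto
    moreover have "last (take (Suc i) xs) = xs ! i" using xs i
      by (subst last_conv_nth) (auto simp: min_def)
    moreover have "length (take (Suc i) xs) = Suc i" using xs i by simp
    ultimately have A: "d x (xs ! i) \<le> i" using d_le_walk[of "take (Suc i) xs" x "xs ! i"] by simp
    have "is_walk E (drop i xs)" using is_walk_drop[OF xs(1), of i] xs(4) i by simp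
    moreover have "hd (drop i xs) = xs ! i" using xs i by (simp add: hd_drop_conv_nth)
    moreover have "last (drop i xs) = y" using xs i by simp
    ultimately have B: "d (xs ! i) y \<le> d x y - i" using d_le_walk[of "drop i xs"] xs i by simp
    have "d x y \<le> d x (xs ! i) + d (xs ! i) y" by (rule d_tri)
    then show ?thesis using A B i by linarith
  qed
  then show ?thesis using xs by blast
qed

end


locale stree = cgraph +
  assumes irrefl: "\<And>x. \<not> E x x"
  and acyc: "\<not> (\<exists>xs. is_walk E xs \<and> distinct xs \<and> 3 \<le> length xs \<and> E (last xs) (hd xs))"

lemma stree_of: "simplicial_tree E \<Longrightarrow> stree E"
  unfolding simplicial_tree_def stree_def stree_axioms_def cgraph_def by blast

locale rtree = stree +
  fixes w0 :: 'a
begin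

definition ht where "ht u = d w0 u"
definition par where "par u = (SOME y. E y u \<and> Suc (ht y) = ht u)"

lemma par: assumes "u \<noteq> w0" shows "E (par u) u" "Suc (ht (par u)) = ht u"
proof -
  have "\<exists>y. E y u \<and> Suc (ht y) = ht u" using d_pred[OF assms] unfolding ht_def .
  then have "E (par u) u \<and> Suc (ht (par u)) = ht u" unfolding par_def by (rule someI_ex)
  then show "E (par u) u" "Suc (ht (par u)) = ht u" by auto
qed

lemma ht_0_iff: "ht u = 0 \<longleftrightarrow> u = w0"
  unfolding ht_def using d_eq_0_iff by metis

lemma ht_w0[simp]: "ht w0 = 0" by (simp add: ht_0_iff)

definition anc where "anc u i = (par ^^ (ht u - i)) u"

lemma ht_funpow: "k \<le> ht u \<Longrightarrow> ht ((par ^^ k) u) = ht u - k"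
proof (induction k)
  case 0
  then show ?case by simp
next
  case (Suc k)
  then have h: "ht ((par ^^ k) u) = ht u - k" by simp
  then have "(par ^^ k) u \<noteq> w0" using Suc.prems ht_0_iff by fastforce
  then have "Suc (ht (par ((par ^^ k) u))) = ht ((par ^^ k) u)" using par by blast
  then show ?case using h by simp
qed

lemma ht_anc[simp]: "i \<le> ht u \<Longrightarrow> ht (anc u i) = i"
  unfolding anc_def using ht_funpow[of "ht u - i" u] by simp

lemma anc_top[simp]: "anc u (ht u) = u"
  unfolding anc_def by simp

lemma anc_0[simp]: "anc u 0 = w0"
proof -
  have "ht (anc u 0) = 0" by simp
  then show ?thesis using ht_0_iff by blast
qed

lemma anc_anc: assumes "j \<le> i" "i \<le> ht u" shows "anc (anc u i) j = anc u j"
proof -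
  have "anc (anc u i) j = (par ^^ (i - j)) (anc u i)"
    unfolding anc_def[of "anc u i" j] using ht_anc[OF assms(2)] by simp
  also have "\<dots> = (par ^^ (i - j)) ((par ^^ (ht u - i)) u)" unfolding anc_def ..
  also have "\<dots> = (par ^^ ((i - j) + (ht u - i))) u" by (simp add: funpow_add)
  also have "(i - j) + (ht u - i) = ht u - j" using assms by simp
  finally show ?thesis unfolding anc_def by simp
qed

lemma anc_Suc: assumes "i < ht u" shows "par (anc u (Suc i)) = anc u i"
proof -
  have "par (anc u (Suc i)) = (par ^^ Suc (ht u - Suc i)) u" unfolding anc_def by simp
  also have "Suc (ht u - Suc i) = ht u - i" using assms by simp
  finally show ?thesis unfolding anc_def .
qed

lemma anc_edge: assumes "i < ht u" shows "E (anc u i) (anc u (Suc i))"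
proof -
  have "ht (anc u (Suc i)) = Suc i" using assms by simp
  then have "anc u (Suc i) \<noteq> w0" using ht_0_iff by fastforce
  then show ?thesis using par(1) anc_Suc[OF assms] by metis
qed

lemma anc_down:
  assumes "j \<le> i" "i \<le> ht u" "i \<le> ht v" "anc u i = anc v i"
  shows "anc u j = anc v j"
  using anc_anc[of j i u] anc_anc[of j i v] assms by simp

definition l where "l u v = (GREATEST i. i \<le> ht u \<and> i \<le> ht v \<and> anc u i = anc v i)"

lemma l_props: "l u v \<le> ht u" "l u v \<le> ht v" "anc u (l u v) = anc v (l u v)"
proof -
  have "(\<lambda>i. i \<le> ht u \<and> i \<le> ht v \<and> anc u i = anc v i) (l u v)"
    unfolding l_def by (rule GreatestI_nat[of _ 0 "ht u"]) auto
  then show "l u v \<le> ht u" "l u v \<le> ht v" "anc u (l u v) = anc v (l u v)" by auto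
qed

lemma l_ge: assumes "i \<le> ht u" "i \<le> ht v" "anc u i = anc v i" shows "i \<le> l u v"
  unfolding l_def by (rule Greatest_le_nat[of _ i "ht u"]) (use assms in auto)

lemma l_sym: "l u v = l v u"
proof -
  have "l u v \<le> l v u" for u v using l_ge[of "l u v" v u] l_props[of u v] by simp
  then show ?thesis by (simp add: le_antisym)
qed

lemma l_refl[simp]: "l u u = ht u"
  using l_props(1)[of u u] l_ge[of "ht u" u u] by simp

lemma l_ultra: "min (l u z) (l z v) \<le> l u v"
proof -
  define i where "i = min (l u z) (l z v)"
  have "anc u i = anc z i"
    using anc_down[of i "l u z" u z] l_props[of u z] i_def by simp
  moreover have "anc z i = anc v i"
    using anc_down[of i "l z v" z v] l_props[of z v] i_def by simp
  ultimately show ?thesis unfolding i_def[symmetric]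
    using l_ge[of i u v] l_props[of u z] l_props[of z v] i_def by simp
qed

lemma inj_anc: "inj_on (anc u) {..ht u}"
proof (intro inj_onI)
  fix i j assume A: "i \<in> {..ht u}" "j \<in> {..ht u}" and B: "anc u i = anc u j"
  have "i = ht (anc u i)" using A by simp
  also have "\<dots> = ht (anc u j)" using B by (rule arg_cong)
  also have "\<dots> = j" using A by simp
  finally show "i = j" .
qed

lemma no_cycle:
  assumes ab: "a \<noteq> b" "ht a = ht b"
  and cl: "E a b \<or> (\<exists>y. E b y \<and> E y a \<and> ht y = Suc (ht a))"
  shows False
proof -
  define L where "L = l a b"
  define h where "h = ht a"
  have Lh: "L < h"
  proof (rule ccontr)
    assume "\<not> L < h"
    then have "L = h" using l_props(1)[of a b] unfolding L_def h_def by simp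
    then have "anc a h = anc b h" using l_props(3)[of a b] unfolding L_def by simp
    then show False using ab anc_top h_def by metis
  qed
  define W1 where "W1 = rev (map (anc a) [L..<Suc h])"
  define W2 where "W2 = map (anc b) [Suc L..<Suc h]"
  define W where "W = W1 @ W2"
  have w1: "is_walk E W1" unfolding W1_def
    by (intro is_walk_rev[OF symE] is_walk_map_upt) (use Lh h_def anc_edge in auto)
  have w2: "is_walk E W2" unfolding W2_def
    by (intro is_walk_map_upt) (use Lh h_def ab anc_edge in auto)
  have jn: "E (last W1) (hd W2)"
  proof -
    have "last W1 = anc a L" unfolding W1_def using Lh by (simp add: last_rev upt_conv_Cons del: upt_Suc)
    moreover have "hd W2 = anc b (Suc L)" unfolding W2_def using Lh by (simp add: upt_conv_Cons del: upt_Suc)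
    moreover have "anc a L = anc b L" using l_props(3) L_def by simp
    ultimately show ?thesis using anc_edge[of L b] Lh ab h_def by simp
  qed
  have wW: "is_walk E W" unfolding W_def using w1 w2 jn by (rule is_walk_append)
  have hdW: "hd W = a" unfolding W_def W1_def using Lh h_def by (simp add: hd_rev last_map)
  have lastW: "last W = b" unfolding W_def W2_def using Lh h_def ab by (simp add: last_map)
  have lenW: "3 \<le> length W" unfolding W_def W1_def W2_def using Lh by simp
  have setW1: "set W1 = anc a ` {L..h}" unfolding W1_def by auto
  have setW2: "set W2 = anc b ` {Suc L..h}" unfolding W2_def by auto
  have "inj_on (anc a) {L..<Suc h}" by (rule inj_on_subset[OF inj_anc]) (auto simp: h_def)
  then have dW1: "distinct W1" unfolding W1_def by (simp add: distinct_map del: upt_Suc)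
  have "inj_on (anc b) {Suc L..<Suc h}" by (rule inj_on_subset[OF inj_anc]) (use ab h_def in auto)
  then have dW2: "distinct W2" unfolding W2_def by (simp add: distinct_map del: upt_Suc)
  have disj: "set W1 \<inter> set W2 = {}"
  proof (rule ccontr)
    assume "set W1 \<inter> set W2 \<noteq> {}"
    then obtain i j where ij: "i \<in> {L..h}" "j \<in> {Suc L..h}" "anc a i = anc b j"
      unfolding setW1 setW2 by blast
    have "i = j" using ij ht_anc[of i a] ht_anc[of j b] ab h_def by auto
    then have "i \<le> L" using l_ge[of i a b] ij ab h_def L_def by auto
    then show False using ij \<open>i = j\<close> by auto
  qed
  have dW: "distinct W" unfolding W_def using dW1 dW2 disj by simp
  have htW: "\<forall>x \<in> set W. ht x \<le> h"
    unfolding W_def using setW1 setW2 ab h_def by auto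
  show False
    using cl
  proof
    assume "E a b"
    then have "E (last W) (hd W)" using hdW lastW E_sym by simp
    then show False using acyc wW dW lenW by blast
  next
    assume "\<exists>y. E b y \<and> E y a \<and> ht y = Suc (ht a)"
    then obtain y where y: "E b y" "E y a" "ht y = Suc h" using h_def by blast
    have c1: "is_walk E (W @ [y])" using wW y lastW by (intro is_walk_append) auto
    have "y \<notin> set W" using htW y(3) by fastforce
    then have c2: "distinct (W @ [y])" using dW by simp
    have c3: "3 \<le> length (W @ [y])" using lenW by simp
    have "W \<noteq> []" using wW unfolding is_walk_def by simp
    then have "hd (W @ [y]) = a" using hdW by simp
    moreover have "last (W @ [y]) = y" by simp
    ultimately have c4: "E (last (W @ [y])) (hd (W @ [y]))" using y(2) by simp
    show False using acyc c1 c2 c3 c4 by blast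
  qed
qed

lemma ht_adj: assumes "E u v" shows "ht u \<le> Suc (ht v)"
proof -
  have "d w0 u \<le> d w0 v + d v u" by (rule d_tri)
  moreover have "d v u \<le> 1" using d_edge E_sym assms by blast
  ultimately show ?thesis unfolding ht_def by simp
qed

lemma adj_cases:
  assumes "E u v"
  shows "(u \<noteq> w0 \<and> v = par u) \<or> (v \<noteq> w0 \<and> u = par v)"
proof -
  have h1: "ht u \<le> Suc (ht v)" "ht v \<le> Suc (ht u)" using ht_adj assms E_sym by blast+
  have "u \<noteq> v" using irrefl assms by blast
  consider "ht u = ht v" | "ht u = Suc (ht v)" | "ht v = Suc (ht u)" using h1 by linarith
  then show ?thesis
  proof cases
    case 1
    then show ?thesis using no_cycle[of u v] assms \<open>u \<noteq> v\<close> by blast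
  next
    case 2
    then have "u \<noteq> w0" using ht_0_iff by fastforce
    have "v = par u"
    proof (rule ccontr)
      assume "v \<noteq> par u"
      have "E v u" using assms E_sym by blast
      moreover have "E u (par u)" using par(1)[OF \<open>u \<noteq> w0\<close>] E_sym by blast
      moreover have "ht (par u) = ht v" using par(2)[OF \<open>u \<noteq> w0\<close>] 2 by simp
      ultimately have "E v u \<and> E u (par u) \<and> ht u = Suc (ht (par u))"
        using par(2)[OF \<open>u \<noteq> w0\<close>] by simp
      then have "\<exists>y. E v y \<and> E y (par u) \<and> ht y = Suc (ht (par u))" by blast
      then show False using no_cycle[of "par u" v] \<open>v \<noteq> par u\<close> \<open>ht (par u) = ht v\<close> by blast
    qed
    then show ?thesis using \<open>u \<noteq> w0\<close> by blast
  next
    case 3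
    then have "v \<noteq> w0" using ht_0_iff by fastforce
    have "u = par v"
    proof (rule ccontr)
      assume "u \<noteq> par v"
      have "E v (par v)" using par(1)[OF \<open>v \<noteq> w0\<close>] E_sym by blast
      moreover have "ht (par v) = ht u" using par(2)[OF \<open>v \<noteq> w0\<close>] 3 by simp
      ultimately have "E u v \<and> E v (par v) \<and> ht v = Suc (ht (par v))"
        using par(2)[OF \<open>v \<noteq> w0\<close>] assms by simp
      then have "\<exists>y. E u y \<and> E y (par v) \<and> ht y = Suc (ht (par v))" by blast
      then show False using no_cycle[of "par v" u] \<open>u \<noteq> par v\<close> \<open>ht (par v) = ht u\<close> by blast
    qed
    then show ?thesis using \<open>v \<noteq> w0\<close> by blast
  qed
qed

lemma anc_par_eq: assumes "u \<noteq> w0" shows "anc u (ht (par u)) = par u"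
proof -
  have h: "ht u = Suc (ht (par u))" using par(2)[OF assms] by simp
  have "par (anc u (Suc (ht (par u)))) = anc u (ht (par u))" using anc_Suc[of "ht (par u)" u] h by simp
  moreover have "anc u (Suc (ht (par u))) = u" using anc_top[of u] h by simp
  ultimately show ?thesis by simp
qed

lemma l_par: assumes "u \<noteq> w0" shows "l u (par u) = ht (par u)"
proof -
  have "ht (par u) \<le> ht u" using par(2)[OF assms] by simp
  then have "ht (par u) \<le> l u (par u)"
    using l_ge[of "ht (par u)" u "par u"] anc_par_eq[OF assms] by simp
  then show ?thesis using l_props(2)[of u "par u"] by simp
qed

lemma d_funpow: "k \<le> ht u \<Longrightarrow> d u ((par ^^ k) u) \<le> k"
proof (induction k)
  case 0
  then show ?case by simp
next
  case (Suc k)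
  have h: "ht ((par ^^ k) u) = ht u - k" using Suc.prems ht_funpow by simp
  then have "(par ^^ k) u \<noteq> w0" using Suc.prems ht_0_iff by fastforce
  then have "d ((par ^^ k) u) (par ((par ^^ k) u)) \<le> 1"
    using par(1) d_edge E_sym by blast
  moreover have "d u ((par ^^ Suc k) u) \<le> d u ((par ^^ k) u) + d ((par ^^ k) u) (par ((par ^^ k) u))"
    using d_tri by simp
  ultimately show ?case using Suc by simp
qed

lemma d_anc: "i \<le> ht u \<Longrightarrow> d u (anc u i) \<le> ht u - i"
  unfolding anc_def by (rule d_funpow) simp

lemma d_le_f: "d u v \<le> ht u + ht v - 2 * l u v"
proof -
  define L where "L = anc u (l u v)"
  have "d u L \<le> ht u - l u v" unfolding L_def using d_anc[of "l u v" u] l_props[of u v] by simp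
  moreover have "d v L \<le> ht v - l u v" unfolding L_def using d_anc[of "l u v" v] l_props[of u v] by simp
  moreover have "d u v \<le> d u L + d L v" by (rule d_tri)
  ultimately show ?thesis using d_sym[of L v] l_props[of u v] by linarith
qed

definition f where "f u v = ht u + ht v - 2 * l u v"

lemma f_tri: "f u v \<le> f u z + f z v"
proof -
  have "min (l u z) (l z v) \<le> l u v" by (rule l_ultra)
  moreover note l_props[of u z] l_props[of z v] l_props[of u v]
  ultimately show ?thesis unfolding f_def by (cases "l u z \<le> l z v") (simp_all add: min_def)
qed

lemma f_edge: assumes "E u v" shows "f u v \<le> 1"
  using adj_cases[OF assms]
proof
  assume A: "u \<noteq> w0 \<and> v = par u"
  then show ?thesis using l_par[of u] par(2)[of u] unfolding f_def by auto
next
  assume A: "v \<noteq> w0 \<and> u = par v"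
  then show ?thesis using l_par[of v] par(2)[of v] l_sym[of u v] unfolding f_def by auto
qed

lemma f_refl: "f u u = 0"
  unfolding f_def l_refl by simp

lemma f_walk: "is_walk E xs \<Longrightarrow> f (hd xs) (last xs) \<le> length xs - 1"
proof (induction xs)
  case Nil
  then show ?case by (simp add: is_walk_def)
next
  case (Cons x xs)
  show ?case
  proof (cases "xs = []")
    case True
    then show ?thesis using f_refl by simp
  next
    case False
    have "xs = [] \<or> (E x (hd xs) \<and> is_walk E xs)" using Cons.prems by (simp only: is_walk_Cons)
    then have "E x (hd xs)" "is_walk E xs" using False by auto
    then have "f (hd xs) (last xs) \<le> length xs - 1" using Cons.IH by simp
    moreover have "f x (hd xs) \<le> 1" using f_edge \<open>E x (hd xs)\<close> by blast
    moreover have "f x (last xs) \<le> f x (hd xs) + f (hd xs) (last xs)" by (rule f_tri)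
    moreover have "length xs \<ge> 1" using False by (cases xs) auto
    ultimately show ?thesis using False by simp
  qed
qed

lemma d_formula: "d u v = ht u + ht v - 2 * l u v"
proof -
  obtain xs where xs: "is_walk E xs" "hd xs = u" "last xs = v" "length xs = Suc (d u v)"
    using d_walk_ex by blast
  have "f u v \<le> d u v" using f_walk[OF xs(1)] xs by simp
  then show ?thesis using d_le_f unfolding f_def by (simp add: le_antisym)
qed

lemma l_le_min: "l u v \<le> min (ht u) (ht v)"
  using l_props by simp

lemma adj_par: "u \<noteq> w0 \<Longrightarrow> E u (par u)"
  using par(1) E_sym by blast

lemma par_neq: "u \<noteq> w0 \<Longrightarrow> par u \<noteq> u"
  using par(2) by fastforce

end


definition vtx :: "'a \<Rightarrow> 'a \<Rightarrow> real" where "vtx u = (\<lambda>w. if w = u then 1 else 0)"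

lemma supp_vtx[simp]: "supp (vtx u) = {u}"
  unfolding supp_def vtx_def by auto

lemma vtx_real[simp]: "vtx u \<in> realization E"
  unfolding realization_def vtx_def by auto

lemma vtx_inj: "vtx u = vtx v \<longleftrightarrow> u = v"
  unfolding vtx_def by (metis zero_neq_one)

context rtree
begin

definition pt :: "'a \<Rightarrow> real \<Rightarrow> 'a \<Rightarrow> real" where
  "pt c r = (\<lambda>w. (if w = c then 1 - r else 0) + (if w = par c then r else 0))"
definition vr :: "'a \<Rightarrow> real \<Rightarrow> bool" where "vr c r \<longleftrightarrow> 0 \<le> r \<and> r < 1 \<and> (r \<noteq> 0 \<longrightarrow> c \<noteq> w0)"
definition hg :: "'a \<Rightarrow> real \<Rightarrow> real" where "hg c r = real (ht c) - r"
definition mm where "mm c r c' r' = min (hg c r) (min (hg c' r') (real (l c c')))"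
definition F where "F c r c' r' = hg c r + hg c' r' - 2 * mm c r c' r'"

lemma pt_0[simp]: "pt c 0 = vtx c"
  unfolding pt_def vtx_def by auto

lemma vr_0[simp]: "vr c 0"
  unfolding vr_def by simp

lemma pt_at_c: "vr c r \<Longrightarrow> pt c r c = 1 - r"
  unfolding pt_def vr_def using par_neq[of c] by (cases "r = 0") auto

lemma pt_at_par: "vr c r \<Longrightarrow> r \<noteq> 0 \<Longrightarrow> pt c r (par c) = r"
  unfolding pt_def vr_def using par_neq[of c] by auto

lemma pt_other: "w \<noteq> c \<Longrightarrow> w \<noteq> par c \<Longrightarrow> pt c r w = 0"
  unfolding pt_def by auto

lemma supp_pt: assumes "vr c r" shows "supp (pt c r) = (if r = 0 then {c} else {c, par c})"
proof (cases "r = 0")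
  case True
  then show ?thesis by simp
next
  case False
  then have "c \<noteq> w0" "r < 1" using assms unfolding vr_def by auto
  then have "par c \<noteq> c" using par_neq by blast
  then show ?thesis using False \<open>r < 1\<close> unfolding supp_def pt_def by auto
qed

lemma supp_pt_sub: "vr c r \<Longrightarrow> supp (pt c r) \<subseteq> {c, par c}"
  using supp_pt by (auto split: if_splits)

lemma c_in_supp: "vr c r \<Longrightarrow> c \<in> supp (pt c r)"
  using supp_pt by (auto split: if_splits)

lemma rep_ex: assumes "P \<in> realization E" shows "\<exists>c r. vr c r \<and> P = pt c r"
proof -
  consider (v) u where "P = (\<lambda>w. if w = u then 1 else 0)"
    | (e) a b t where "E a b" "0 < t" "t < 1" "P = (\<lambda>w. if w = a then 1 - t else if w = b then t else 0)"
    using assms unfolding realization_def by blast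
  then show ?thesis
  proof cases
    case v
    then have "P = pt u 0" by (simp add: vtx_def)
    then show ?thesis using vr_0 by blast
  next
    case e
    have "a \<noteq> b" using e irrefl by blast
    from adj_cases[OF e(1)] show ?thesis
    proof
      assume A: "a \<noteq> w0 \<and> b = par a"
      have "P = pt a t" using A \<open>a \<noteq> b\<close> e(4) unfolding pt_def by auto
      moreover have "vr a t" using A e unfolding vr_def by auto
      ultimately show ?thesis by blast
    next
      assume A: "b \<noteq> w0 \<and> a = par b"
      have "P = pt b (1 - t)" using A \<open>a \<noteq> b\<close> e(4) unfolding pt_def by (auto simp: fun_eq_iff)
      moreover have "vr b (1 - t)" using A e unfolding vr_def by auto
      ultimately show ?thesis by blast
    qed
  qed
qed

lemma pt_real: assumes "vr c r" shows "pt c r \<in> realization E"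
proof (cases "r = 0")
  case True
  then show ?thesis by simp
next
  case False
  then have "c \<noteq> w0" "0 < r" "r < 1" using assms unfolding vr_def by auto
  then have "E c (par c)" "par c \<noteq> c" using adj_par par_neq by auto
  moreover have "pt c r = (\<lambda>w. if w = c then 1 - r else if w = par c then r else 0)"
    using \<open>par c \<noteq> c\<close> unfolding pt_def by auto
  ultimately show ?thesis unfolding realization_def using \<open>0 < r\<close> \<open>r < 1\<close> by blast
qed

lemma F_sym: "F c r c' r' = F c' r' c r"
  unfolding F_def mm_def using l_sym[of c c'] by (simp add: min.commute min.left_commute)

lemma mm_ultra: "min (mm c1 r1 c2 r2) (mm c2 r2 c3 r3) \<le> mm c1 r1 c3 r3"
proof -
  have "min (l c1 c2) (l c2 c3) \<le> l c1 c3" by (rule l_ultra)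
  then have "min (real (l c1 c2)) (real (l c2 c3)) \<le> real (l c1 c3)"
    by (metis of_nat_le_iff of_nat_min)
  then show ?thesis unfolding mm_def by linarith
qed

lemma mm_le: "mm c r c' r' \<le> hg c r" "mm c r c' r' \<le> hg c' r'"
  unfolding mm_def by auto

lemma F_tri: "F c1 r1 c3 r3 \<le> F c1 r1 c2 r2 + F c2 r2 c3 r3"
  using mm_ultra[of c1 r1 c2 r2 c3 r3] mm_le[of c1 r1 c2 r2] mm_le[of c2 r2 c3 r3]
  unfolding F_def by linarith

lemma F_nonneg: "0 \<le> F c r c' r'"
  using mm_le[of c r c' r'] unfolding F_def by linarith

lemma F_self: assumes "0 \<le> r" shows "F c r c r = 0"
proof -
  have "l c c = ht c" by simp
  moreover have "hg c r \<le> real (ht c)" unfolding hg_def using assms by simp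
  ultimately show ?thesis unfolding F_def mm_def hg_def by (simp add: min_def)
qed

lemma F_vv: "F a 0 b 0 = real (d a b)"
proof -
  have "l a b \<le> ht a" "l a b \<le> ht b" using l_props by auto
  then have "mm a 0 b 0 = real (l a b)" unfolding mm_def hg_def by simp
  moreover have "2 * l a b \<le> ht a + ht b" using \<open>l a b \<le> ht a\<close> \<open>l a b \<le> ht b\<close> by simp
  ultimately show ?thesis unfolding F_def hg_def using d_formula[of a b] by (simp add: of_nat_diff)
qed

lemma F_c: assumes "vr c r" shows "F c r c 0 = r"
  using assms unfolding F_def mm_def hg_def vr_def by (simp add: min_def)

lemma F_par: assumes "vr c r" "r \<noteq> 0" shows "F c r (par c) 0 = 1 - r"
proof -
  have "c \<noteq> w0" "r < 1" "0 \<le> r" using assms unfolding vr_def by auto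
  then have "l c (par c) = ht (par c)" "ht c = Suc (ht (par c))" using l_par par(2) by auto
  then show ?thesis unfolding F_def mm_def hg_def using \<open>r < 1\<close> by (simp add: min_def)
qed

lemma l_par_gen: assumes "c \<noteq> w0" shows "l (par c) x = min (l c x) (ht (par c))"
proof -
  have hc: "ht c = Suc (ht (par c))" using par(2)[OF assms] by simp
  have pc: "par c = anc c (ht (par c))" using anc_par_eq[OF assms] by simp
  have A: "anc (par c) i = anc c i" if "i \<le> ht (par c)" for i
    using anc_anc[of i "ht (par c)" c] that hc pc by simp
  define i where "i = min (l c x) (ht (par c))"
  have "anc c i = anc x i" using anc_down[of i "l c x" c x] l_props[of c x] i_def by simp
  then have "i \<le> l (par c) x" using l_ge[of i "par c" x] A[of i] l_props[of c x] i_def by simp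
  moreover
  define j where "j = l (par c) x"
  have "j \<le> ht (par c)" "j \<le> ht x" using l_props j_def by auto
  moreover have "anc c j = anc x j" using A[of j] l_props(3)[of "par c" x] j_def \<open>j \<le> ht (par c)\<close> by simp
  then have "j \<le> l c x" using l_ge[of j c x] \<open>j \<le> ht (par c)\<close> \<open>j \<le> ht x\<close> hc by simp
  ultimately show ?thesis unfolding i_def j_def by simp
qed

lemma supp_val: assumes "vr c r" "a \<in> supp (pt c r)" shows "1 - pt c r a = F c r a 0"
proof (cases "r = 0")
  case True
  then have "a = c" using assms supp_pt by auto
  then show ?thesis using True F_c[OF assms(1)] pt_at_c[OF assms(1)] by simp
next
  case False
  then have "a = c \<or> a = par c" using assms supp_pt by auto
  then show ?thesis
  proof
    assume "a = c" then show ?thesis using F_c[OF assms(1)] pt_at_c[OF assms(1)] by simp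
  next
    assume "a = par c" then show ?thesis using F_par[OF assms(1) False] pt_at_par[OF assms(1) False] by simp
  qed
qed

lemma exitP:
  assumes vr: "vr c r" "vr c' r'" and ne: "r = 0 \<or> c \<noteq> c'"
  shows "\<exists>a \<in> supp (pt c r). F c r c' r' = F c r a 0 + F a 0 c' r'"
proof (cases "r = 0")
  case True
  have "F c r c r = 0" using F_self[of r c] vr(1) unfolding vr_def by simp
  then show ?thesis using True c_in_supp[OF vr(1)] by (intro bexI[of _ c]) auto
next
  case False
  then have cc': "c \<noteq> c'" using ne by simp
  have cw: "c \<noteq> w0" and r01: "0 < r" "r < 1" using vr(1) False unfolding vr_def by auto
  define p where "p = par c"
  have hc: "ht c = Suc (ht p)" using par(2)[OF cw] p_def by simp
  have lp: "l p c' = min (l c c') (ht p)" using l_par_gen[OF cw] p_def by simp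
  have Fp: "F c r p 0 = 1 - r" using F_par[OF vr(1) False] p_def by simp
  have lcp: "l c p = ht p" using l_par[OF cw] p_def by simp
  have psupp: "p \<in> supp (pt c r)" using supp_pt[OF vr(1)] False p_def by simp
  have L: "l c c' \<le> ht c" using l_props by simp
  show ?thesis
  proof (cases "l c c' \<le> ht p \<or> hg c' r' \<le> real (ht p)")
    case True
    have "F c r c' r' = F c r p 0 + F p 0 c' r'"
    proof -
      have "real (l p c') = min (real (l c c')) (real (ht p))" using lp by simp
      moreover have "real (ht c) = real (ht p) + 1" using hc by simp
      moreover have "real (l c c') \<le> real (ht p) \<or> hg c' r' \<le> real (ht p)" using True by simp
      ultimately show ?thesis unfolding F_def mm_def hg_def Fp using r01
        by (simp add: lcp min_def split: if_splits)
    qed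
    then show ?thesis using psupp by blast
  next
    case False
    then have lcc: "l c c' = ht c" and hQ: "hg c' r' > real (ht p)" using hc L by auto
    have "ht c < ht c'"
    proof (rule ccontr)
      assume "\<not> ht c < ht c'"
      then have "ht c' = ht c" using l_props(2)[of c c'] lcc by simp
      then have "anc c' (ht c) = c'" using anc_top[of c'] by metis
      moreover have "anc c (ht c) = anc c' (ht c)" using l_props(3)[of c c'] lcc by simp
      ultimately show False using cc' by simp
    qed
    then have "real (ht c) + 1 \<le> real (ht c')" by simp
    moreover have "r' < 1" using vr(2) unfolding vr_def by simp
    ultimately have hQ2: "hg c' r' > real (ht c)" unfolding hg_def by simp
    have "F c r c' r' = F c r c 0 + F c 0 c' r'"
      unfolding F_def mm_def lcc using hQ2 r01 by (simp add: hg_def min_def)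
    then show ?thesis using c_in_supp[OF vr(1)] by blast
  qed
qed

lemma supp_sub_edge:
  assumes "vr c r" "e \<noteq> w0" "supp (pt c r) \<subseteq> {e, par e}"
  shows "c = e \<or> (c = par e \<and> r = 0)"
proof -
  have "c \<in> {e, par e}" using c_in_supp[OF assms(1)] assms(3) by blast
  moreover have False if "c = par e" "r \<noteq> 0"
  proof -
    have cw: "c \<noteq> w0" using assms(1) that(2) unfolding vr_def by simp
    have "par c \<in> {e, par e}" using supp_pt[OF assms(1)] that(2) assms(3) by auto
    moreover have "par c \<noteq> c" using par_neq[OF cw] .
    ultimately have "par c = e" using that(1) by auto
    then have "ht e = ht (par c)" by simp
    moreover have "Suc (ht (par c)) = ht c" using par(2)[OF cw] .
    moreover have "Suc (ht c) = ht e" using par(2)[OF assms(2)] that(1) by simp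
    ultimately show False by simp
  qed
  ultimately show ?thesis by blast
qed

lemma edge_pos:
  assumes "vr c r" "e \<noteq> w0" "supp (pt c r) \<subseteq> {e, par e}"
  shows "\<exists>\<rho>. 0 \<le> \<rho> \<and> \<rho> \<le> 1 \<and> pt c r e = 1 - \<rho> \<and> pt c r (par e) = \<rho> \<and> hg c r = real (ht e) - \<rho>
     \<and> (c = e \<or> (c = par e \<and> \<rho> = 1))"
proof -
  have pe: "par e \<noteq> e" using par_neq[OF assms(2)] .
  have he: "ht e = Suc (ht (par e))" using par(2)[OF assms(2)] by simp
  from supp_sub_edge[OF assms] show ?thesis
  proof
    assume ce: "c = e"
    have "pt c r (par e) = r"
    proof (cases "r = 0")
      case True then show ?thesis using pe ce by (simp add: vtx_def)
    next
      case False then show ?thesis using pt_at_par[OF assms(1) False] ce by simp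
    qed
    then show ?thesis using ce pt_at_c[OF assms(1)] assms(1) unfolding vr_def hg_def
      by (intro exI[of _ r]) auto
  next
    assume A: "c = par e \<and> r = 0"
    then show ?thesis using pe he unfolding hg_def
      by (intro exI[of _ 1]) (auto simp: vtx_def)
  qed
qed

lemma ce_sum:
  assumes vr: "vr c r" "vr c' r'" and e: "e \<noteq> w0"
    and s1: "supp (pt c r) \<subseteq> {e, par e}" and s2: "supp (pt c' r') \<subseteq> {e, par e}"
  shows "(\<Sum>w\<in>supp (pt c r) \<union> supp (pt c' r'). \<bar>pt c r w - pt c' r' w\<bar>) / 2 = F c r c' r'"
proof -
  obtain \<rho> where \<rho>: "0 \<le> \<rho>" "\<rho> \<le> 1" "pt c r e = 1 - \<rho>" "pt c r (par e) = \<rho>" "hg c r = real (ht e) - \<rho>"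
     "c = e \<or> (c = par e \<and> \<rho> = 1)"
    using edge_pos[OF vr(1) e s1] by blast
  obtain \<sigma> where \<sigma>: "0 \<le> \<sigma>" "\<sigma> \<le> 1" "pt c' r' e = 1 - \<sigma>" "pt c' r' (par e) = \<sigma>" "hg c' r' = real (ht e) - \<sigma>"
     "c' = e \<or> (c' = par e \<and> \<sigma> = 1)"
    using edge_pos[OF vr(2) e s2] by blast
  have pe: "par e \<noteq> e" using par_neq[OF e] .
  have he: "ht e = Suc (ht (par e))" using par(2)[OF e] by simp
  have lep: "l e (par e) = ht (par e)" using l_par[OF e] .
  have "(\<Sum>w\<in>supp (pt c r) \<union> supp (pt c' r'). \<bar>pt c r w - pt c' r' w\<bar>)
      = (\<Sum>w\<in>{e, par e}. \<bar>pt c r w - pt c' r' w\<bar>)"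
  proof (rule sum.mono_neutral_left)
    show "finite {e, par e}" by simp
    show "supp (pt c r) \<union> supp (pt c' r') \<subseteq> {e, par e}" using s1 s2 by blast
    show "\<forall>i\<in>{e, par e} - (supp (pt c r) \<union> supp (pt c' r')). \<bar>pt c r i - pt c' r' i\<bar> = 0"
      unfolding supp_def by auto
  qed
  also have "\<dots> = 2 * \<bar>\<rho> - \<sigma>\<bar>" using pe \<rho> \<sigma> by simp
  finally have S: "(\<Sum>w\<in>supp (pt c r) \<union> supp (pt c' r'). \<bar>pt c r w - pt c' r' w\<bar>) / 2 = \<bar>\<rho> - \<sigma>\<bar>"
    by simp
  have "min (hg c r) (hg c' r') \<le> real (l c c')"
    using \<rho>(6) \<sigma>(6) \<rho>(5) \<sigma>(5) \<rho>(1) \<sigma>(1) lep l_sym[of "par e" e] he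
    by (auto simp: min_def)
  then have "mm c r c' r' = min (hg c r) (hg c' r')" unfolding mm_def min_def by (auto split: if_splits)
  then have "F c r c' r' = \<bar>\<rho> - \<sigma>\<bar>" unfolding F_def using \<rho>(5) \<sigma>(5) by (simp add: min_def)
  then show ?thesis using S by simp
qed

lemma tdist_pt:
  assumes vr: "vr c r" "vr c' r'"
  shows "tdist E (pt c r) (pt c' r') = F c r c' r'"
proof (cases "\<exists>u v. (u = v \<or> E u v) \<and> supp (pt c r) \<subseteq> {u, v} \<and> supp (pt c' r') \<subseteq> {u, v}")
  case True
  then have T: "tdist E (pt c r) (pt c' r') =
      (\<Sum>w\<in>supp (pt c r) \<union> supp (pt c' r'). \<bar>pt c r w - pt c' r' w\<bar>) / 2"
    unfolding tdist_def by simp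
  from True obtain u v where uv: "u = v \<or> E u v" "supp (pt c r) \<subseteq> {u, v}" "supp (pt c' r') \<subseteq> {u, v}"
    by blast
  show ?thesis
  proof (cases "u = v")
    case True
    have "c = u" "c' = u" using c_in_supp[OF vr(1)] c_in_supp[OF vr(2)] uv True by auto
    have "r = 0"
    proof (rule ccontr)
      assume "r \<noteq> 0"
      then have "par c \<in> supp (pt c r)" "c \<noteq> w0" using supp_pt[OF vr(1)] vr(1) unfolding vr_def by auto
      then show False using uv True \<open>c = u\<close> par_neq by auto
    qed
    have "r' = 0"
    proof (rule ccontr)
      assume "r' \<noteq> 0"
      then have "par c' \<in> supp (pt c' r')" "c' \<noteq> w0" using supp_pt[OF vr(2)] vr(2) unfolding vr_def by auto
      then show False using uv True \<open>c' = u\<close> par_neq by auto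
    qed
    have "F c r c' r' = 0" using F_self[of 0 u] \<open>c = u\<close> \<open>c' = u\<close> \<open>r = 0\<close> \<open>r' = 0\<close> by simp
    then show ?thesis using T \<open>c = u\<close> \<open>c' = u\<close> \<open>r = 0\<close> \<open>r' = 0\<close> by simp
  next
    case False
    then have "E u v" using uv by simp
    from adj_cases[OF this] show ?thesis
    proof
      assume A: "u \<noteq> w0 \<and> v = par u"
      then show ?thesis using T ce_sum[OF vr, of u] uv by simp
    next
      assume A: "v \<noteq> w0 \<and> u = par v"
      then have "{u, v} = {v, par v}" by auto
      then show ?thesis using T ce_sum[OF vr, of v] uv A by simp
    qed
  qed
next
  case False
  define P where "P = pt c r"
  define Q where "Q = pt c' r'"
  define S where "S = {(1 - P a) + real (gdist E a b) + (1 - Q b) | a b. a \<in> supp P \<and> b \<in> supp Q}"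
  have T: "tdist E P Q = Min S" unfolding tdist_def S_def P_def Q_def by (rule if_not_P[OF False])
  have fin: "finite S" unfolding S_def
    by (rule finite_image_set2) (use supp_pt[OF vr(1)] supp_pt[OF vr(2)] P_def Q_def in auto)
  have lower: "F c r c' r' \<le> y" if yS: "y \<in> S" for y
  proof -
    obtain a b where ab: "a \<in> supp P" "b \<in> supp Q" "y = (1 - P a) + real (gdist E a b) + (1 - Q b)"
      using yS unfolding S_def by blast
    have "y = F c r a 0 + F a 0 b 0 + F b 0 c' r'"
      using ab supp_val[OF vr(1)] supp_val[OF vr(2)] F_vv[of a b] F_sym[of c' r' b 0] P_def Q_def by simp
    moreover have "F c r c' r' \<le> F c r a 0 + F a 0 c' r'" by (rule F_tri)
    moreover have "F a 0 c' r' \<le> F a 0 b 0 + F b 0 c' r'" by (rule F_tri)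
    ultimately show ?thesis by simp
  qed
  have ne: "r = 0 \<or> c \<noteq> c'"
  proof (rule ccontr)
    assume "\<not> (r = 0 \<or> c \<noteq> c')"
    then have "r \<noteq> 0" "c = c'" by auto
    then have "c \<noteq> w0" using vr(1) unfolding vr_def by simp
    then have "E c (par c)" using adj_par by blast
    moreover have "supp (pt c r) \<subseteq> {c, par c}" "supp (pt c' r') \<subseteq> {c, par c}"
      using supp_pt_sub[OF vr(1)] supp_pt_sub[OF vr(2)] \<open>c = c'\<close> by auto
    ultimately show False using False by blast
  qed
  obtain a where a: "a \<in> supp P" "F c r c' r' = F c r a 0 + F a 0 c' r'"
    using exitP[OF vr ne] P_def by blast
  obtain b where b: "b \<in> supp Q" "F a 0 c' r' = F a 0 b 0 + F b 0 c' r'"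
  proof (cases "r' = 0 \<or> c' \<noteq> a")
    case True
    obtain b where b1: "b \<in> supp Q" and b2: "F c' r' a 0 = F c' r' b 0 + F b 0 a 0"
      using exitP[OF vr(2) vr_0[of a] True] Q_def by blast
    have "F a 0 c' r' = F a 0 b 0 + F b 0 c' r'"
      using b2 F_sym[of a 0 c' r'] F_sym[of c' r' b 0] F_sym[of b 0 a 0] by simp
    then show ?thesis using that b1 by blast
  next
    case False
    then have "c' = a" by simp
    then have "a \<in> supp Q" using c_in_supp[OF vr(2)] Q_def by simp
    moreover have "F a 0 a 0 = 0" using F_self[of 0 a] by simp
    ultimately show ?thesis using that[of a] by simp
  qed
  have "F c r c' r' \<in> S"
  proof -
    have "(1 - P a) + real (gdist E a b) + (1 - Q b) \<in> S" using a b S_def by blast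
    moreover have "(1 - P a) + real (gdist E a b) + (1 - Q b) = F c r c' r'"
      using a b supp_val[OF vr(1)] supp_val[OF vr(2)] F_vv[of a b] F_sym[of c' r' b 0] P_def Q_def by simp
    ultimately show ?thesis by simp
  qed
  then have "Min S = F c r c' r'" using fin lower by (intro Min_eqI) auto
  then show ?thesis using T P_def Q_def by simp
qed

end


context rtree
begin

abbreviation RR where "RR \<equiv> realization E"
abbreviation D where "D \<equiv> tdist E"

lemma mm_sym: "mm c r c' r' = mm c' r' c r"
  unfolding mm_def using l_sym[of c c'] by (simp add: min.commute min.left_commute)

lemma F_4pt:
  "F c1 r1 c2 r2 + F c3 r3 c4 r4 \<le> max (F c1 r1 c3 r3 + F c2 r2 c4 r4) (F c1 r1 c4 r4 + F c2 r2 c3 r3)"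
proof -
  define a where "a = mm c1 r1 c2 r2"
  define b where "b = mm c3 r3 c4 r4"
  define p where "p = mm c1 r1 c3 r3"
  define q where "q = mm c2 r2 c4 r4"
  define u where "u = mm c1 r1 c4 r4"
  define v where "v = mm c2 r2 c3 r3"
  have U: "min (mm x1 s1 x3 s3) (mm x3 s3 x2 s2) \<le> mm x1 s1 x2 s2" for x1 s1 x2 s2 x3 s3
    using mm_ultra[of x1 s1 x3 s3 x2 s2] .
  have f1: "min p v \<le> a" using U[of c1 r1 c3 r3 c2 r2] mm_sym[of c3 r3 c2 r2] unfolding a_def p_def v_def by simp
  have f2: "min u q \<le> a" using U[of c1 r1 c4 r4 c2 r2] mm_sym[of c4 r4 c2 r2] unfolding a_def u_def q_def by simp
  have f3: "min p u \<le> b" using U[of c3 r3 c1 r1 c4 r4] mm_sym[of c3 r3 c1 r1] unfolding b_def p_def u_def by simp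
  have f4: "min v q \<le> b" using U[of c3 r3 c2 r2 c4 r4] mm_sym[of c3 r3 c2 r2] unfolding b_def v_def q_def by simp
  have f5: "min a v \<le> p" using U[of c1 r1 c2 r2 c3 r3] unfolding a_def v_def p_def by simp
  have f6: "min u b \<le> p" using U[of c1 r1 c4 r4 c3 r3] mm_sym[of c4 r4 c3 r3] unfolding u_def b_def p_def by simp
  have f7: "min a q \<le> u" using U[of c1 r1 c2 r2 c4 r4] unfolding a_def q_def u_def by simp
  have f8: "min p b \<le> u" using U[of c1 r1 c3 r3 c4 r4] unfolding p_def b_def u_def by simp
  have f9: "min a u \<le> q" using U[of c2 r2 c1 r1 c4 r4] mm_sym[of c2 r2 c1 r1] unfolding a_def u_def q_def by simp
  have f10: "min v b \<le> q" using U[of c2 r2 c3 r3 c4 r4] unfolding v_def b_def q_def by simp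
  have f11: "min a p \<le> v" using U[of c2 r2 c1 r1 c3 r3] mm_sym[of c2 r2 c1 r1] unfolding a_def p_def v_def by simp
  have f12: "min q b \<le> v" using U[of c2 r2 c4 r4 c3 r3] mm_sym[of c4 r4 c3 r3] unfolding q_def b_def v_def by simp
  have key: "min (p + q) (u + v) \<le> a + b"
    using f1 f2 f3 f4 f5 f6 f7 f8 f9 f10 f11 f12 unfolding min_def by (smt (verit))
  then show ?thesis unfolding F_def a_def[symmetric] b_def[symmetric] p_def[symmetric] q_def[symmetric] u_def[symmetric] v_def[symmetric]
    by (simp add: max_def min_def split: if_splits)
qed

lemma D_rep:
  assumes "P \<in> RR" "Q \<in> RR"
  obtains c r c' r' where "vr c r" "vr c' r'" "P = pt c r" "Q = pt c' r'" "D P Q = F c r c' r'"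
  using rep_ex[OF assms(1)] rep_ex[OF assms(2)] tdist_pt by blast

lemma D_sym: assumes "P \<in> RR" "Q \<in> RR" shows "D P Q = D Q P"
proof -
  obtain c r c' r' where "vr c r" "vr c' r'" "P = pt c r" "Q = pt c' r'" "D P Q = F c r c' r'"
    using D_rep[OF assms] .
  then show ?thesis using tdist_pt F_sym by metis
qed

lemma D_nonneg: assumes "P \<in> RR" "Q \<in> RR" shows "0 \<le> D P Q"
  using D_rep[OF assms] F_nonneg by metis

lemma D_self: assumes "P \<in> RR" shows "D P P = 0"
proof -
  obtain c r where "vr c r" "P = pt c r" using rep_ex[OF assms] by blast
  then show ?thesis using tdist_pt F_self unfolding vr_def by metis
qed

lemma D_tri: assumes "P \<in> RR" "Q \<in> RR" "Z \<in> RR" shows "D P Q \<le> D P Z + D Z Q"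
proof -
  obtain c r where c: "vr c r" "P = pt c r" using rep_ex[OF assms(1)] by blast
  obtain c' r' where c': "vr c' r'" "Q = pt c' r'" using rep_ex[OF assms(2)] by blast
  obtain c'' r'' where c'': "vr c'' r''" "Z = pt c'' r''" using rep_ex[OF assms(3)] by blast
  show ?thesis using c c' c'' tdist_pt F_tri by metis
qed

lemma D_4pt:
  assumes "P1 \<in> RR" "P2 \<in> RR" "P3 \<in> RR" "P4 \<in> RR"
  shows "D P1 P2 + D P3 P4 \<le> max (D P1 P3 + D P2 P4) (D P1 P4 + D P2 P3)"
proof -
  obtain c1 r1 where 1: "vr c1 r1" "P1 = pt c1 r1" using rep_ex[OF assms(1)] by blast
  obtain c2 r2 where 2: "vr c2 r2" "P2 = pt c2 r2" using rep_ex[OF assms(2)] by blast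
  obtain c3 r3 where 3: "vr c3 r3" "P3 = pt c3 r3" using rep_ex[OF assms(3)] by blast
  obtain c4 r4 where 4: "vr c4 r4" "P4 = pt c4 r4" using rep_ex[OF assms(4)] by blast
  show ?thesis using F_4pt[of c1 r1 c2 r2 c3 r3 c4 r4] 1 2 3 4 tdist_pt by simp
qed

lemma D_vv: "D (vtx u) (vtx v) = real (d u v)"
  using tdist_pt[of u 0 v 0] F_vv by simp

lemma F_zero: assumes "vr c r" "vr c' r'" "F c r c' r' = 0" shows "c = c' \<and> r = r'"
proof -
  have m: "mm c r c' r' = hg c r" "mm c r c' r' = hg c' r'"
    using assms(3) mm_le[of c r c' r'] unfolding F_def by linarith+
  then have "hg c r \<le> real (l c c')" "hg c' r' \<le> real (l c c')" unfolding mm_def by (simp_all add: min_def split: if_splits)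
  moreover have "l c c' \<le> ht c" "l c c' \<le> ht c'" using l_props by auto
  moreover have "0 \<le> r" "r < 1" "0 \<le> r'" "r' < 1" using assms unfolding vr_def by auto
  ultimately have "real (ht c) - 1 < real (l c c')" "real (ht c') - 1 < real (l c c')"
    unfolding hg_def by linarith+
  then have "ht c \<le> l c c'" "ht c' \<le> l c c'" by linarith+
  then have lc: "l c c' = ht c" "l c c' = ht c'" using \<open>l c c' \<le> ht c\<close> \<open>l c c' \<le> ht c'\<close> by auto
  have "anc c (ht c) = anc c' (ht c)" using l_props(3)[of c c'] lc by simp
  then have "c = c'" using lc anc_top by metis
  moreover have "r = r'" using m \<open>c = c'\<close> unfolding hg_def by simp
  ultimately show ?thesis by simp
qed

lemma D_zero: assumes "P \<in> RR" "Q \<in> RR" "D P Q = 0" shows "P = Q"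
proof -
  obtain c r c' r' where "vr c r" "vr c' r'" "P = pt c r" "Q = pt c' r'" "D P Q = F c r c' r'"
    using D_rep[OF assms(1,2)] .
  then show ?thesis using F_zero assms(3) by metis
qed

lemma supp_ne: assumes "P \<in> RR" shows "\<exists>x. x \<in> supp P"
  using rep_ex[OF assms] c_in_supp by blast

lemma supp_fin: assumes "P \<in> RR" shows "finite (supp P)" "card (supp P) \<le> 2"
proof -
  obtain c r where "vr c r" "P = pt c r" using rep_ex[OF assms] by blast
  then have "supp P \<subseteq> {c, par c}" using supp_pt_sub by simp
  moreover have "card {c, par c} \<le> 2" by (cases "c = par c") auto
  ultimately show "finite (supp P)" "card (supp P) \<le> 2"
    using finite_subset card_mono[of "{c, par c}" "supp P"] by auto
qed

lemma D_supp: assumes "P \<in> RR" "x \<in> supp P" shows "D P (vtx x) \<le> 1"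
proof -
  obtain c r where cr: "vr c r" "P = pt c r" using rep_ex[OF assms(1)] by blast
  have "D P (vtx x) = F c r x 0" using tdist_pt[OF cr(1) vr_0[of x]] cr by simp
  also have "\<dots> = 1 - P x" using supp_val[OF cr(1)] assms(2) cr by simp
  also have "\<dots> \<le> 1"
  proof -
    have "0 \<le> r" "r < 1" using cr unfolding vr_def by auto
    then have "0 \<le> pt c r x" unfolding pt_def by auto
    then show ?thesis using cr by simp
  qed
  finally show ?thesis .
qed

lemma D_supp_bound:
  assumes "P \<in> RR" "Q \<in> RR" "x \<in> supp P" "y \<in> supp Q"
  shows "D P Q \<le> real (d x y) + 2"
proof -
  have "D P Q \<le> D P (vtx x) + D (vtx x) Q" using D_tri assms by simp
  also have "D (vtx x) Q \<le> D (vtx x) (vtx y) + D (vtx y) Q" using D_tri assms by simp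
  finally have "D P Q \<le> D P (vtx x) + D (vtx x) (vtx y) + D (vtx y) Q" by simp
  moreover have "D (vtx y) Q = D Q (vtx y)" using D_sym assms by simp
  ultimately show ?thesis using D_supp[OF assms(1,3)] D_supp[OF assms(2,4)] D_vv by simp
qed

lemma root_step:
  assumes "X \<in> RR"
  shows "\<exists>p. D (vtx w0) (vtx p) + D (vtx p) X = D (vtx w0) X \<and> D (vtx p) X < 1"
proof -
  obtain c r where cr: "vr c r" "X = pt c r" using rep_ex[OF assms] by blast
  show ?thesis
  proof (cases "r = 0")
    case True
    then show ?thesis using cr D_self[of X] assms by (intro exI[of _ c]) simp
  next
    case False
    then have cw: "c \<noteq> w0" and r: "0 < r" "r < 1" using cr unfolding vr_def by auto
    have hc: "ht c = Suc (ht (par c))" using par(2)[OF cw] by simp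
    have lw: "l w0 x = 0" for x using l_props(1)[of w0 x] by simp
    have "D (vtx w0) (vtx (par c)) = real (ht (par c))" using D_vv ht_def by simp
    moreover have "D (vtx (par c)) X = 1 - r"
      using tdist_pt[OF vr_0[of "par c"] cr(1)] F_par[OF cr(1) False] F_sym cr by simp
    moreover have "D (vtx w0) X = real (ht c) - r"
    proof -
      have "1 \<le> real (ht c)" using hc by simp
      then show ?thesis
        using tdist_pt[OF vr_0[of w0] cr(1)] cr r lw unfolding F_def mm_def hg_def by (simp add: min_def)
    qed
    ultimately show ?thesis using hc r by (intro exI[of _ "par c"]) simp
  qed
qed

end


lemma iso_affine:
  fixes \<theta> :: "real \<Rightarrow> real"
  assumes iso: "\<And>s t. s \<in> A \<Longrightarrow> t \<in> A \<Longrightarrow> \<bar>\<theta> s - \<theta> t\<bar> = \<bar>s - t\<bar>"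
    and s0: "s0 \<in> A" and s1: "s1 \<in> A" "s1 \<noteq> s0"
  shows "\<exists>e. (e = 1 \<or> e = -1) \<and> (\<forall>s\<in>A. \<theta> s = \<theta> s0 + e * (s - s0))"
proof -
  define e where "e = (\<theta> s1 - \<theta> s0) / (s1 - s0)"
  have "\<bar>\<theta> s1 - \<theta> s0\<bar> = \<bar>s1 - s0\<bar>" using iso s0 s1 by simp
  then have e1: "e = 1 \<or> e = -1" unfolding e_def using s1 by (auto simp: abs_if divide_simps split: if_splits)
  have eq1: "\<theta> s1 = \<theta> s0 + e * (s1 - s0)" unfolding e_def using s1 by (simp add: divide_simps)
  have "\<theta> s = \<theta> s0 + e * (s - s0)" if s: "s \<in> A" for s
  proof -
    have a: "\<bar>\<theta> s - \<theta> s0\<bar> = \<bar>s - s0\<bar>" using iso s s0 by simp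
    have b: "\<bar>\<theta> s - \<theta> s1\<bar> = \<bar>s - s1\<bar>" using iso s s1 by simp
    show ?thesis using a b eq1 e1 s1(2) by (auto simp: abs_if split: if_splits)
  qed
  then show ?thesis using e1 by blast
qed

lemma iso_affine_UNIV:
  fixes \<theta> :: "real \<Rightarrow> real"
  assumes iso: "\<And>s t. \<bar>\<theta> s - \<theta> t\<bar> = \<bar>s - t\<bar>"
  shows "\<exists>e. (e = 1 \<or> e = -1) \<and> (\<forall>s. \<theta> s = \<theta> 0 + e * s)"
  using iso_affine[of UNIV \<theta> 0 1] iso by auto

context rtree
begin

definition betw where "betw P X Q \<longleftrightarrow> D P X + D X Q = D P Q"

definition isoline where "isoline \<gamma> \<longleftrightarrow> (\<forall>s. \<gamma> s \<in> RR) \<and> (\<forall>s t. D (\<gamma> s) (\<gamma> t) = \<bar>s - t\<bar>)"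

lemma isolineD: "isoline \<gamma> \<Longrightarrow> \<gamma> s \<in> RR" "isoline \<gamma> \<Longrightarrow> D (\<gamma> s) (\<gamma> t) = \<bar>s - t\<bar>"
  unfolding isoline_def by auto

lemma geo_unique:
  assumes "P \<in> RR" "Q \<in> RR" "X \<in> RR" "Y \<in> RR" "betw P X Q" "betw P Y Q" "D P X = D P Y"
  shows "X = Y"
proof -
  have "D P Q + D X Y \<le> max (D P X + D Q Y) (D P Y + D Q X)" using D_4pt assms(1-4) by blast
  moreover have "D Q Y = D Y Q" "D Q X = D X Q" using D_sym assms by auto
  ultimately have "D X Y \<le> 0" using assms(5-7) unfolding betw_def by (simp add: max_def split: if_splits)
  then have "D X Y = 0" using D_nonneg assms by (simp add: order_antisym)
  then show ?thesis using D_zero assms by blast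
qed

lemma betw_sym: "P \<in> RR \<Longrightarrow> Q \<in> RR \<Longrightarrow> X \<in> RR \<Longrightarrow> betw P X Q \<Longrightarrow> betw Q X P"
  unfolding betw_def using D_sym by simp

lemma betw_shift:
  assumes R: "a \<in> RR" "a' \<in> RR" "u \<in> RR" "b \<in> RR" and B: "betw a u b" and lt: "D a a' < D a u"
  shows "betw a' u b"
proof -
  have "D a b + D u a' \<le> max (D a u + D b a') (D a a' + D b u)" using D_4pt R by blast
  moreover have "D a b = D a u + D u b" using B unfolding betw_def by simp
  moreover have "D a u \<le> D a a' + D a' u" using D_tri R by blast
  moreover have "D u a' = D a' u" "D b a' = D a' b" "D b u = D u b" using D_sym R by auto
  moreover have "D a' b \<le> D a' u + D u b" using D_tri R by blast
  moreover have "0 \<le> D a' u" using D_nonneg R by blast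
  ultimately show ?thesis unfolding betw_def using lt by (auto simp: max_def split: if_splits)
qed

lemma Dl_cont: assumes "isoline \<gamma>" "P \<in> RR" shows "isCont (\<lambda>s. D P (\<gamma> s)) x"
proof -
  have L: "\<bar>D P (\<gamma> s) - D P (\<gamma> t)\<bar> \<le> \<bar>s - t\<bar>" for s t
  proof -
    have "D P (\<gamma> s) \<le> D P (\<gamma> t) + D (\<gamma> t) (\<gamma> s)" using D_tri assms isolineD by blast
    moreover have "D P (\<gamma> t) \<le> D P (\<gamma> s) + D (\<gamma> s) (\<gamma> t)" using D_tri assms isolineD by blast
    ultimately show ?thesis using isolineD[OF assms(1)] by (simp add: abs_minus_commute)
  qed
  show ?thesis unfolding isCont_def LIM_eq
  proof (intro allI impI)
    fix r :: real assume "0 < r"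
    then show "\<exists>s>0. \<forall>y. y \<noteq> x \<and> norm (y - x) < s \<longrightarrow> norm (D P (\<gamma> y) - D P (\<gamma> x)) < r"
      using L by (intro exI[of _ r]) (auto intro: le_less_trans)
  qed
qed

lemma proj_ex:
  assumes L: "isoline \<gamma>" and P: "P \<in> RR"
  shows "\<exists>s0. \<forall>s. D P (\<gamma> s) = D P (\<gamma> s0) + \<bar>s - s0\<bar>"
proof -
  define f where "f s = D P (\<gamma> s)" for s
  define R where "R = 2 * f 0 + 1"
  have f0: "0 \<le> f 0" unfolding f_def using D_nonneg P isolineD[OF L] by blast
  have "\<exists>M. (\<forall>x. -R \<le> x \<and> x \<le> R \<longrightarrow> M \<le> f x) \<and> (\<exists>x. -R \<le> x \<and> x \<le> R \<and> f x = M)"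
    by (rule isCont_eq_Lb) (use f0 R_def Dl_cont[OF L P] f_def in auto)
  then obtain s0 where s0: "-R \<le> s0" "s0 \<le> R" "\<forall>x. -R \<le> x \<and> x \<le> R \<longrightarrow> f s0 \<le> f x" by blast
  have glob: "f s0 \<le> f s" for s
  proof (cases "-R \<le> s \<and> s \<le> R")
    case True then show ?thesis using s0 by blast
  next
    case False
    have "D (\<gamma> 0) (\<gamma> s) \<le> D (\<gamma> 0) P + D P (\<gamma> s)" using D_tri P isolineD[OF L] by blast
    moreover have "D (\<gamma> 0) P = f 0" unfolding f_def using D_sym P isolineD[OF L] by metis
    ultimately have "\<bar>s\<bar> \<le> f 0 + f s" using isolineD(2)[OF L, of 0 s] f_def by simp
    then have "f s > f 0" using False R_def by auto
    moreover have "f s0 \<le> f 0" using s0 f0 R_def by auto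
    ultimately show ?thesis by simp
  qed
  define r where "r = f s0"
  have "f s = r + \<bar>s - s0\<bar>" for s
  proof (rule ccontr)
    assume ne: "f s \<noteq> r + \<bar>s - s0\<bar>"
    have le: "f s \<le> r + \<bar>s - s0\<bar>"
    proof -
      have "D P (\<gamma> s) \<le> D P (\<gamma> s0) + D (\<gamma> s0) (\<gamma> s)" using D_tri P isolineD[OF L] by blast
      then show ?thesis using isolineD(2)[OF L, of s0 s] unfolding f_def r_def by (simp add: abs_minus_commute)
    qed
    define Lg where "Lg = \<bar>s - s0\<bar>"
    define \<delta> where "\<delta> = (r + Lg - f s) / 2"
    have dpos: "\<delta> > 0" using le ne unfolding \<delta>_def Lg_def by simp
    have "s \<noteq> s0" using ne r_def by auto
    then have Lpos: "Lg > 0" unfolding Lg_def by simp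
    define \<theta> where "\<theta> = min \<delta> Lg / 2"
    have th: "0 < \<theta>" "\<theta> < \<delta>" "\<theta> < Lg" using dpos Lpos unfolding \<theta>_def by (auto simp: min_def)
    define s' where "s' = s0 + \<theta> * (s - s0) / Lg"
    have d1: "\<bar>s' - s0\<bar> = \<theta>" unfolding s'_def Lg_def using th Lpos Lg_def
      by (simp add: abs_mult abs_divide)
    have d2: "\<bar>s - s'\<bar> = Lg - \<theta>"
    proof -
      have "s - s' = (s - s0) * (1 - \<theta> / Lg)" unfolding s'_def using Lpos by (simp add: field_simps)
      then have "\<bar>s - s'\<bar> = Lg * (1 - \<theta> / Lg)" using th Lpos unfolding Lg_def
        by (simp add: abs_mult)
      moreover have "Lg * (1 - \<theta> / Lg) = Lg - \<theta>" using Lpos by (simp add: right_diff_distrib)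
      ultimately show ?thesis by simp
    qed
    have "D P (\<gamma> s') + D (\<gamma> s0) (\<gamma> s) \<le> max (D P (\<gamma> s0) + D (\<gamma> s') (\<gamma> s)) (D P (\<gamma> s) + D (\<gamma> s') (\<gamma> s0))"
      using D_4pt P isolineD(1)[OF L] by blast
    then have "f s' + Lg \<le> max (r + (Lg - \<theta>)) (f s + \<theta>)"
      using isolineD(2)[OF L] d1 d2 unfolding f_def r_def Lg_def by (simp add: abs_minus_commute)
    then have "f s' < r" using th unfolding \<delta>_def by (auto simp: max_def split: if_splits)
    then show False using glob[of s'] r_def by simp
  qed
  then show ?thesis unfolding f_def r_def by blast
qed

lemma line_vertex:
  assumes L: "isoline \<gamma>"
  shows "\<exists>s u. \<gamma> s = vtx u"
proof -
  have rR: "vtx w0 \<in> RR" by simp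
  obtain s0 where s0: "\<And>s. D (vtx w0) (\<gamma> s) = D (vtx w0) (\<gamma> s0) + \<bar>s - s0\<bar>"
    using proj_ex[OF L rR] by blast
  define X where "X = \<gamma> (s0 + 2)"
  have XR: "X \<in> RR" unfolding X_def using isolineD[OF L] by blast
  obtain p where p: "D (vtx w0) (vtx p) + D (vtx p) X = D (vtx w0) X" "D (vtx p) X < 1"
    using root_step[OF XR] by blast
  define a where "a = D (vtx p) X"
  have a0: "0 \<le> a" unfolding a_def using D_nonneg XR by simp
  define Y where "Y = \<gamma> (s0 + 2 - a)"
  have YR: "Y \<in> RR" unfolding Y_def using isolineD[OF L] by blast
  have DX: "D (vtx w0) X = D (vtx w0) (\<gamma> s0) + 2" unfolding X_def using s0[of "s0 + 2"] by simp
  have DY: "D (vtx w0) Y = D (vtx w0) (\<gamma> s0) + 2 - a" unfolding Y_def using s0[of "s0 + 2 - a"] p(2) a_def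
    by simp
  have DYX: "D Y X = a" unfolding X_def Y_def using isolineD(2)[OF L] a0 by simp
  have "betw (vtx w0) Y X" unfolding betw_def using DX DY DYX by simp
  moreover have "betw (vtx w0) (vtx p) X" unfolding betw_def using p(1) .
  moreover have "D (vtx w0) (vtx p) = D (vtx w0) Y" using p(1) DX DY a_def by simp
  ultimately have "vtx p = Y" using geo_unique[of "vtx w0" X "vtx p" Y] XR YR by simp
  then show ?thesis unfolding Y_def by metis
qed

lemma line_transl:
  assumes L: "isoline \<gamma>"
    and TR: "\<And>P. P \<in> RR \<Longrightarrow> T P \<in> RR"
    and Tiso: "\<And>P Q. P \<in> RR \<Longrightarrow> Q \<in> RR \<Longrightarrow> D (T P) (T Q) = D P Q"
    and inv: "T ` range \<gamma> = range \<gamma>"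
    and disp: "\<And>P. P \<in> RR \<Longrightarrow> lb \<le> D P (T P)" and lam: "0 < lb"
  shows "\<exists>\<tau>. lb \<le> \<bar>\<tau>\<bar> \<and> (\<forall>s. T (\<gamma> s) = \<gamma> (s + \<tau>))"
proof -
  have "\<forall>s. \<exists>t. T (\<gamma> s) = \<gamma> t"
  proof
    fix s
    have "T (\<gamma> s) \<in> T ` range \<gamma>" by (rule imageI) (rule rangeI)
    then have "T (\<gamma> s) \<in> range \<gamma>" using inv by simp
    then show "\<exists>t. T (\<gamma> s) = \<gamma> t" by blast
  qed
  then have "\<exists>\<sigma>. \<forall>s. T (\<gamma> s) = \<gamma> (\<sigma> s)" by (rule choice)
  then obtain \<sigma> where \<sigma>: "\<And>s. T (\<gamma> s) = \<gamma> (\<sigma> s)" by blast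
  have iso: "\<bar>\<sigma> s - \<sigma> t\<bar> = \<bar>s - t\<bar>" for s t
  proof -
    have "D (T (\<gamma> s)) (T (\<gamma> t)) = D (\<gamma> s) (\<gamma> t)" using Tiso isolineD[OF L] by blast
    then show ?thesis using \<sigma>[of s] \<sigma>[of t] isolineD(2)[OF L] by simp
  qed
  obtain e where e: "e = 1 \<or> e = -1" "\<And>s. \<sigma> s = \<sigma> 0 + e * s" using iso_affine_UNIV[OF iso] by blast
  have "e = 1"
  proof (rule ccontr)
    assume "e \<noteq> 1"
    then have "e = -1" using e by simp
    define c where "c = \<sigma> 0 / 2"
    have "T (\<gamma> c) = \<gamma> c" using \<sigma>[of c] e(2)[of c] \<open>e = -1\<close> unfolding c_def by simp
    then have "D (\<gamma> c) (T (\<gamma> c)) = 0" using D_self isolineD[OF L] by simp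
    then show False using disp[of "\<gamma> c"] lam isolineD[OF L] by simp
  qed
  then have T: "T (\<gamma> s) = \<gamma> (s + \<sigma> 0)" for s using \<sigma>[of s] e(2)[of s] by (simp add: add.commute)
  have "lb \<le> D (\<gamma> 0) (T (\<gamma> 0))" using disp isolineD[OF L] by blast
  then have "lb \<le> \<bar>\<sigma> 0\<bar>" using T[of 0] isolineD(2)[OF L] by simp
  then show ?thesis using T by blast
qed

lemma U1:
  assumes L: "isoline \<gamma>"
    and TR: "\<And>P. P \<in> RR \<Longrightarrow> T P \<in> RR"
    and Tiso: "\<And>P Q. P \<in> RR \<Longrightarrow> Q \<in> RR \<Longrightarrow> D (T P) (T Q) = D P Q"
    and Tg: "\<And>s. T (\<gamma> s) = \<gamma> (s + \<tau>)" and tau: "\<tau> \<noteq> 0"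
    and P: "P \<in> RR"
  shows "\<exists>s0. 2 * D P (\<gamma> s0) + \<bar>\<tau>\<bar> \<le> D P (T P)"
proof -
  obtain s0 where s0: "\<And>s. D P (\<gamma> s) = D P (\<gamma> s0) + \<bar>s - s0\<bar>" using proj_ex[OF L P] by blast
  define r where "r = D P (\<gamma> s0)"
  have gR: "\<gamma> s \<in> RR" for s using isolineD[OF L] by blast
  have TP: "T P \<in> RR" using TR P by blast
  have DT: "D (T P) (\<gamma> s) = r + \<bar>s - \<tau> - s0\<bar>" for s
  proof -
    have e: "\<gamma> s = T (\<gamma> (s - \<tau>))" using Tg[of "s - \<tau>"] by simp
    have "D (T P) (\<gamma> s) = D (T P) (T (\<gamma> (s - \<tau>)))" using e by (rule arg_cong[where f="D (T P)"])
    also have "\<dots> = D P (\<gamma> (s - \<tau>))" using Tiso[OF P gR] .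
    finally have "D (T P) (\<gamma> s) = D P (\<gamma> (s - \<tau>))" .
    then show ?thesis using s0[of "s - \<tau>"] r_def by simp
  qed
  have "D P (\<gamma> (s0 + \<tau>)) + D (T P) (\<gamma> s0) \<le> max (D P (T P) + D (\<gamma> (s0 + \<tau>)) (\<gamma> s0)) (D P (\<gamma> s0) + D (\<gamma> (s0 + \<tau>)) (T P))"
    using D_4pt P TP gR by blast
  moreover have "D (\<gamma> (s0 + \<tau>)) (T P) = D (T P) (\<gamma> (s0 + \<tau>))" using D_sym TP gR by blast
  ultimately have "r + \<bar>\<tau>\<bar> + (r + \<bar>\<tau>\<bar>) \<le> max (D P (T P) + \<bar>\<tau>\<bar>) (r + r)"
    using s0[of "s0 + \<tau>"] DT[of s0] DT[of "s0 + \<tau>"] isolineD(2)[OF L] r_def by simp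
  then have "2 * r + \<bar>\<tau>\<bar> \<le> D P (T P)" using tau by (auto simp: max_def split: if_splits)
  then show ?thesis using r_def by blast
qed

lemma line_unique:
  assumes L1: "isoline \<gamma>" and L2: "isoline \<eta>"
    and TR: "\<And>P. P \<in> RR \<Longrightarrow> T P \<in> RR"
    and Tiso: "\<And>P Q. P \<in> RR \<Longrightarrow> Q \<in> RR \<Longrightarrow> D (T P) (T Q) = D P Q"
    and T1: "\<And>s. T (\<gamma> s) = \<gamma> (s + \<tau>)" and tau: "\<tau> \<noteq> 0"
    and T2: "\<And>s. T (\<eta> s) = \<eta> (s + \<sigma>)" and sig: "\<sigma> \<noteq> 0"
  shows "range \<eta> \<subseteq> range \<gamma>"
proof
  fix P assume "P \<in> range \<eta>"
  then obtain t where t: "P = \<eta> t" by blast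
  have PR: "P \<in> RR" using t isolineD[OF L2] by blast
  obtain s0 where s0: "2 * D P (\<gamma> s0) + \<bar>\<tau>\<bar> \<le> D P (T P)" using U1[OF L1 TR Tiso T1 tau PR] by blast
  have "D P (T P) = \<bar>\<sigma>\<bar>" using t T2 isolineD(2)[OF L2] by simp
  have QR: "\<gamma> 0 \<in> RR" using isolineD[OF L1] by blast
  obtain s1 where s1: "2 * D (\<gamma> 0) (\<eta> s1) + \<bar>\<sigma>\<bar> \<le> D (\<gamma> 0) (T (\<gamma> 0))" using U1[OF L2 TR Tiso T2 sig QR] by blast
  have "D (\<gamma> 0) (T (\<gamma> 0)) = \<bar>\<tau>\<bar>" using T1 isolineD(2)[OF L1] by simp
  have "0 \<le> D (\<gamma> 0) (\<eta> s1)" using D_nonneg QR isolineD[OF L2] by blast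
  then have "D P (\<gamma> s0) \<le> 0" using s0 s1 \<open>D P (T P) = \<bar>\<sigma>\<bar>\<close> \<open>D (\<gamma> 0) (T (\<gamma> 0)) = \<bar>\<tau>\<bar>\<close> by simp
  then have "D P (\<gamma> s0) = 0" using D_nonneg PR isolineD[OF L1] by (simp add: order_antisym)
  then have "P = \<gamma> s0" using D_zero PR isolineD[OF L1] by blast
  then show "P \<in> range \<gamma>" by simp
qed

end


context rtree
begin

lemma line_betw:
  assumes L: "isoline \<gamma>" "a \<le> s" "s \<le> b"
  shows "betw (\<gamma> a) (\<gamma> s) (\<gamma> b)"
  unfolding betw_def using isolineD(2)[OF L(1)] L by simp

lemma on_segment:
  assumes L: "isoline \<eta>" and Z: "Z \<in> RR" and B: "betw (\<eta> v2) Z (\<eta> v1)"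
  shows "\<exists>t. Z = \<eta> t"
proof -
  have R: "\<eta> x \<in> RR" for x using isolineD[OF L] by blast
  define \<rho> where "\<rho> = D (\<eta> v2) Z"
  have r0: "0 \<le> \<rho>" unfolding \<rho>_def using D_nonneg R Z by blast
  have "0 \<le> D Z (\<eta> v1)" using D_nonneg R Z by blast
  then have rle: "\<rho> \<le> \<bar>v1 - v2\<bar>" using B isolineD(2)[OF L, of v2 v1] unfolding betw_def \<rho>_def
    by (simp add: abs_minus_commute)
  show ?thesis
  proof (cases "v1 = v2")
    case True
    then have "\<rho> = 0" using r0 rle by simp
    then have "Z = \<eta> v2" using D_zero R Z \<rho>_def by metis
    then show ?thesis by blast
  next
    case False
    define Y where "Y = \<eta> (v2 + (v1 - v2) * \<rho> / \<bar>v1 - v2\<bar>)"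
    have "\<bar>(v1 - v2) * \<rho> / \<bar>v1 - v2\<bar>\<bar> = \<rho>" using False r0 by (simp add: abs_mult)
    then have d1: "D (\<eta> v2) Y = \<rho>" unfolding Y_def using isolineD(2)[OF L] by simp
    have "v1 - (v2 + (v1 - v2) * \<rho> / \<bar>v1 - v2\<bar>) = (v1 - v2) * (1 - \<rho> / \<bar>v1 - v2\<bar>)"
      using False by (simp add: field_simps)
    moreover have "0 \<le> 1 - \<rho> / \<bar>v1 - v2\<bar>" using rle False by simp
    ultimately have "\<bar>v1 - (v2 + (v1 - v2) * \<rho> / \<bar>v1 - v2\<bar>)\<bar> = \<bar>v1 - v2\<bar> * (1 - \<rho> / \<bar>v1 - v2\<bar>)"
      by (simp add: abs_mult)
    also have "\<dots> = \<bar>v1 - v2\<bar> - \<rho>" using False by (simp add: right_diff_distrib)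
    finally have d2: "D Y (\<eta> v1) = \<bar>v1 - v2\<bar> - \<rho>" unfolding Y_def using isolineD(2)[OF L]
      by (simp add: abs_minus_commute)
    have "\<bar>v2 - v1\<bar> = \<bar>v1 - v2\<bar>" by (rule abs_minus_commute)
    then have "betw (\<eta> v2) Y (\<eta> v1)" unfolding betw_def using d1 d2 isolineD(2)[OF L, of v2 v1]
      by simp
    moreover have YR: "Y \<in> RR" unfolding Y_def using R by blast
    moreover have "D (\<eta> v2) Z = D (\<eta> v2) Y" using d1 \<rho>_def by simp
    ultimately have "Z = Y" using geo_unique[of "\<eta> v2" "\<eta> v1" Z Y] R Z B by blast
    then show ?thesis unfolding Y_def by blast
  qed
qed

lemma overlap_pt:
  assumes L1: "isoline \<gamma>" and L2: "isoline \<eta>"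
    and n1: "D (\<gamma> u1) (\<eta> v1) \<le> \<epsilon>" and n2: "D (\<gamma> u2) (\<eta> v2) \<le> \<epsilon>"
    and s: "u1 + \<epsilon> < s" "s < u2 - \<epsilon>"
  shows "\<exists>t. \<gamma> s = \<eta> t"
proof -
  have R1: "\<gamma> x \<in> RR" for x using isolineD[OF L1] by blast
  have R2: "\<eta> x \<in> RR" for x using isolineD[OF L2] by blast
  have e0: "0 \<le> \<epsilon>" using n1 D_nonneg R1 R2 by (meson order_trans)
  have b0: "betw (\<gamma> u1) (\<gamma> s) (\<gamma> u2)" using line_betw[OF L1] s e0 by simp
  have "D (\<gamma> u1) (\<eta> v1) < D (\<gamma> u1) (\<gamma> s)" using n1 s isolineD(2)[OF L1, of u1 s] e0 by simp
  then have b1: "betw (\<eta> v1) (\<gamma> s) (\<gamma> u2)" using betw_shift[OF R1 R2 R1 R1 b0] by blast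
  then have b1': "betw (\<gamma> u2) (\<gamma> s) (\<eta> v1)" using betw_sym R1 R2 by blast
  have "D (\<gamma> u2) (\<eta> v2) < D (\<gamma> u2) (\<gamma> s)" using n2 s isolineD(2)[OF L1, of u2 s] e0 by simp
  then have "betw (\<eta> v2) (\<gamma> s) (\<eta> v1)" using betw_shift[OF R1 R2 R1 R2 b1'] by blast
  then show ?thesis using on_segment[OF L2 R1] by metis
qed

lemma overlap_affine:
  assumes L1: "isoline \<gamma>" and L2: "isoline \<eta>"
    and n1: "D (\<gamma> u1) (\<eta> v1) \<le> \<epsilon>" and n2: "D (\<gamma> u2) (\<eta> v2) \<le> \<epsilon>"
    and long: "u1 + \<epsilon> < u2 - \<epsilon>"
  shows "\<exists>e c0. (e = 1 \<or> e = -1) \<and> (\<forall>s. u1 + \<epsilon> < s \<and> s < u2 - \<epsilon> \<longrightarrow> \<gamma> s = \<eta> (c0 + e * s))"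
proof -
  define A where "A = {s. u1 + \<epsilon> < s \<and> s < u2 - \<epsilon>}"
  have "\<forall>s\<in>A. \<exists>t. \<gamma> s = \<eta> t" using overlap_pt[OF L1 L2 n1 n2] A_def by blast
  then obtain \<theta> where \<theta>: "\<And>s. s \<in> A \<Longrightarrow> \<gamma> s = \<eta> (\<theta> s)" by metis
  have iso: "\<bar>\<theta> s - \<theta> t\<bar> = \<bar>s - t\<bar>" if "s \<in> A" "t \<in> A" for s t
    using isolineD(2)[OF L1, of s t] isolineD(2)[OF L2, of "\<theta> s" "\<theta> t"] \<theta>[OF that(1)] \<theta>[OF that(2)] by simp
  define m where "m = (u1 + u2) / 2"
  define m' where "m' = m + (u2 - \<epsilon> - m) / 2"
  have mA: "m \<in> A" "m' \<in> A" "m' \<noteq> m" using long unfolding A_def m_def m'_def by (auto simp: field_simps)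
  obtain e where e: "e = 1 \<or> e = -1" "\<forall>s\<in>A. \<theta> s = \<theta> m + e * (s - m)"
    using iso_affine[of A \<theta> m m'] iso mA by blast
  have "\<forall>s. u1 + \<epsilon> < s \<and> s < u2 - \<epsilon> \<longrightarrow> \<gamma> s = \<eta> ((\<theta> m - e * m) + e * s)"
  proof (intro allI impI)
    fix s assume "u1 + \<epsilon> < s \<and> s < u2 - \<epsilon>"
    then have "s \<in> A" unfolding A_def by simp
    then show "\<gamma> s = \<eta> ((\<theta> m - e * m) + e * s)" using \<theta> e(2) by (simp add: algebra_simps)
  qed
  then show ?thesis using e(1) by blast
qed

end


locale gaa =
  fixes G :: "('g, 'm) monoid_scheme" and \<phi> :: "'g \<Rightarrow> 'v \<Rightarrow> 'v" and E :: "'v \<Rightarrow> 'v \<Rightarrow> bool"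
  assumes grp: "group G" and gaa: "graph_aut_action G \<phi> E"
begin

lemma ga: "group_action G UNIV \<phi>"
  using gaa unfolding graph_aut_action_def by blast

lemma edge: "g \<in> carrier G \<Longrightarrow> E (\<phi> g u) (\<phi> g v) \<longleftrightarrow> E u v"
  using gaa unfolding graph_aut_action_def by blast

lemma mult: "g \<in> carrier G \<Longrightarrow> h \<in> carrier G \<Longrightarrow> \<phi> (g \<otimes>\<^bsub>G\<^esub> h) x = \<phi> g (\<phi> h x)"
  using group_action.composition_rule[OF ga] by blast

lemma one: "\<phi> \<one>\<^bsub>G\<^esub> x = x"
proof -
  have "(\<lambda>x \<in> UNIV. x) = \<phi> \<one>\<^bsub>G\<^esub>" using group_action.id_eq_one[OF ga] .
  then show ?thesis by (metis UNIV_I restrict_apply')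
qed

lemma inv1: "g \<in> carrier G \<Longrightarrow> \<phi> (inv\<^bsub>G\<^esub> g) (\<phi> g x) = x"
  using mult[of "inv\<^bsub>G\<^esub> g" g x] one group.l_inv[OF grp] group.inv_closed[OF grp] by simp

lemma inv2: "g \<in> carrier G \<Longrightarrow> \<phi> g (\<phi> (inv\<^bsub>G\<^esub> g) x) = x"
  using mult[of g "inv\<^bsub>G\<^esub> g" x] one group.r_inv[OF grp] group.inv_closed[OF grp] by simp

lemma inv_eq: assumes "g \<in> carrier G" shows "\<phi> (inv\<^bsub>G\<^esub> g) w = a \<longleftrightarrow> w = \<phi> g a"
  using inv1[OF assms] inv2[OF assms] by metis

lemma inj: "g \<in> carrier G \<Longrightarrow> \<phi> g x = \<phi> g y \<longleftrightarrow> x = y"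
  using inv1 by metis

lemma dist:
  assumes "cgraph E" "g \<in> carrier G"
  shows "gdist E (\<phi> g x) (\<phi> g y) = gdist E x y"
proof -
  have "gdist E (\<phi> g x) (\<phi> g y) \<le> gdist E x y"
    using cgraph.d_hom[OF assms(1), of "\<phi> g"] edge[OF assms(2)] by blast
  moreover have "gdist E (\<phi> (inv\<^bsub>G\<^esub> g) (\<phi> g x)) (\<phi> (inv\<^bsub>G\<^esub> g) (\<phi> g y)) \<le> gdist E (\<phi> g x) (\<phi> g y)"
    using cgraph.d_hom[OF assms(1), of "\<phi> (inv\<^bsub>G\<^esub> g)"] edge group.inv_closed[OF grp assms(2)] by blast
  ultimately show ?thesis using inv1[OF assms(2)] by simp
qed

abbreviation A where "A \<equiv> act_pt G \<phi>"

lemma A_mult: "g \<in> carrier G \<Longrightarrow> h \<in> carrier G \<Longrightarrow> A (g \<otimes>\<^bsub>G\<^esub> h) P = A g (A h P)"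
  unfolding act_pt_def
  using group.inv_mult_group[OF grp, of g h] mult group.inv_closed[OF grp] by simp

lemma A_one: "A \<one>\<^bsub>G\<^esub> P = P"
  unfolding act_pt_def using one monoid.inv_one[OF group.is_monoid[OF grp]] by simp

lemma A_inv1: "g \<in> carrier G \<Longrightarrow> A (inv\<^bsub>G\<^esub> g) (A g P) = P"
  using A_mult[of "inv\<^bsub>G\<^esub> g" g P] A_one group.l_inv[OF grp] group.inv_closed[OF grp] by simp

lemma A_inv2: "g \<in> carrier G \<Longrightarrow> A g (A (inv\<^bsub>G\<^esub> g) P) = P"
  using A_mult[of g "inv\<^bsub>G\<^esub> g" P] A_one group.r_inv[OF grp] group.inv_closed[OF grp] by simp

lemma A_vtx: "g \<in> carrier G \<Longrightarrow> A g (vtx u) = vtx (\<phi> g u)"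
  unfolding act_pt_def vtx_def by (rule ext) (simp add: inv_eq)

lemma A_supp: "g \<in> carrier G \<Longrightarrow> supp (A g P) = \<phi> g ` supp P"
  unfolding act_pt_def supp_def
proof safe
  fix w assume g: "g \<in> carrier G" and "P (\<phi> (inv\<^bsub>G\<^esub> g) w) \<noteq> 0"
  then show "w \<in> \<phi> g ` {w. P w \<noteq> 0}" using inv2[OF g, of w] by (metis (mono_tags) imageI mem_Collect_eq)
next
  fix x assume g: "g \<in> carrier G" and "P x \<noteq> 0" "P (\<phi> (inv\<^bsub>G\<^esub> g) (\<phi> g x)) = 0"
  then show False using inv1[OF g] by simp
qed

lemma A_real: assumes g: "g \<in> carrier G" and P: "P \<in> realization E" shows "A g P \<in> realization E"
proof -
  consider (v) u where "P = (\<lambda>w. if w = u then 1 else 0)"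
    | (e) a b t where "E a b" "0 < t" "t < 1" "P = (\<lambda>w. if w = a then 1 - t else if w = b then t else 0)"
    using P unfolding realization_def by blast
  then show ?thesis
  proof cases
    case v
    then have "P = vtx u" unfolding vtx_def by simp
    then show ?thesis using A_vtx[OF g] by simp
  next
    case e
    have "A g P = (\<lambda>w. if w = \<phi> g a then 1 - t else if w = \<phi> g b then t else 0)"
      unfolding act_pt_def e(4) by (rule ext) (simp add: inv_eq[OF g])
    moreover have "E (\<phi> g a) (\<phi> g b)" using edge[OF g] e(1) by simp
    ultimately show ?thesis unfolding realization_def using e(2,3) by blast
  qed
qed

lemma A_iso:
  assumes c: "cgraph E" and g: "g \<in> carrier G"
  shows "tdist E (A g P) (A g Q) = tdist E P Q"
proof -
  define \<sigma> where "\<sigma> = \<phi> g"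
  define \<sigma>' where "\<sigma>' = \<phi> (inv\<^bsub>G\<^esub> g)"
  have ig: "inv\<^bsub>G\<^esub> g \<in> carrier G" using group.inv_closed[OF grp g] .
  have s1: "\<sigma>' (\<sigma> x) = x" "\<sigma> (\<sigma>' x) = x" for x unfolding \<sigma>_def \<sigma>'_def using inv1[OF g] inv2[OF g] by auto
  have AP: "A g P = (\<lambda>w. P (\<sigma>' w))" "A g Q = (\<lambda>w. Q (\<sigma>' w))" unfolding act_pt_def \<sigma>'_def by auto
  have sP: "supp (A g P) = \<sigma> ` supp P" "supp (A g Q) = \<sigma> ` supp Q" using A_supp[OF g] \<sigma>_def by auto
  have injs: "inj \<sigma>" using s1 by (metis injI)
  have ed: "E (\<sigma> u) (\<sigma> v) \<longleftrightarrow> E u v" "E (\<sigma>' u) (\<sigma>' v) \<longleftrightarrow> E u v" for u v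
    unfolding \<sigma>_def \<sigma>'_def using edge g ig by auto
  have C: "(\<exists>u v. (u = v \<or> E u v) \<and> supp (A g P) \<subseteq> {u, v} \<and> supp (A g Q) \<subseteq> {u, v}) \<longleftrightarrow>
           (\<exists>u v. (u = v \<or> E u v) \<and> supp P \<subseteq> {u, v} \<and> supp Q \<subseteq> {u, v})"
  proof
    assume "\<exists>u v. (u = v \<or> E u v) \<and> supp (A g P) \<subseteq> {u, v} \<and> supp (A g Q) \<subseteq> {u, v}"
    then obtain u v where uv: "u = v \<or> E u v" "\<sigma> ` supp P \<subseteq> {u, v}" "\<sigma> ` supp Q \<subseteq> {u, v}" using sP by auto
    have sub: "X \<subseteq> {\<sigma>' u, \<sigma>' v}" if "\<sigma> ` X \<subseteq> {u, v}" for X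
    proof
      fix x assume "x \<in> X"
      then have "\<sigma> x \<in> {u, v}" using that by blast
      then have "\<sigma>' (\<sigma> x) \<in> {\<sigma>' u, \<sigma>' v}" by blast
      then show "x \<in> {\<sigma>' u, \<sigma>' v}" using s1 by simp
    qed
    have "supp P \<subseteq> {\<sigma>' u, \<sigma>' v}" "supp Q \<subseteq> {\<sigma>' u, \<sigma>' v}" using sub uv(2,3) by auto
    moreover have "\<sigma>' u = \<sigma>' v \<or> E (\<sigma>' u) (\<sigma>' v)" using uv(1) ed by auto
    ultimately show "\<exists>u v. (u = v \<or> E u v) \<and> supp P \<subseteq> {u, v} \<and> supp Q \<subseteq> {u, v}" by blast
  next
    assume "\<exists>u v. (u = v \<or> E u v) \<and> supp P \<subseteq> {u, v} \<and> supp Q \<subseteq> {u, v}"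
    then obtain u v where uv: "u = v \<or> E u v" "supp P \<subseteq> {u, v}" "supp Q \<subseteq> {u, v}" by blast
    have "supp (A g P) \<subseteq> {\<sigma> u, \<sigma> v}" "supp (A g Q) \<subseteq> {\<sigma> u, \<sigma> v}" using uv sP by auto
    moreover have "\<sigma> u = \<sigma> v \<or> E (\<sigma> u) (\<sigma> v)" using uv(1) ed by auto
    ultimately show "\<exists>u v. (u = v \<or> E u v) \<and> supp (A g P) \<subseteq> {u, v} \<and> supp (A g Q) \<subseteq> {u, v}" by blast
  qed
  have S: "(\<Sum>w\<in>supp (A g P) \<union> supp (A g Q). \<bar>A g P w - A g Q w\<bar>) = (\<Sum>w\<in>supp P \<union> supp Q. \<bar>P w - Q w\<bar>)"
  proof -
    have "supp (A g P) \<union> supp (A g Q) = \<sigma> ` (supp P \<union> supp Q)" using sP by auto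
    then have "(\<Sum>w\<in>supp (A g P) \<union> supp (A g Q). \<bar>A g P w - A g Q w\<bar>) = (\<Sum>w\<in>\<sigma> ` (supp P \<union> supp Q). \<bar>P (\<sigma>' w) - Q (\<sigma>' w)\<bar>)"
      using AP by simp
    also have "\<dots> = (\<Sum>w\<in>supp P \<union> supp Q. \<bar>P (\<sigma>' (\<sigma> w)) - Q (\<sigma>' (\<sigma> w))\<bar>)"
      by (subst sum.reindex) (use injs in \<open>auto simp: inj_on_def\<close>)
    finally show ?thesis using s1 by simp
  qed
  have dd: "gdist E (\<sigma> a) (\<sigma> b) = gdist E a b" for a b using dist[OF c g] \<sigma>_def by simp
  have M: "{(1 - A g P a) + real (gdist E a b) + (1 - A g Q b) | a b. a \<in> supp (A g P) \<and> b \<in> supp (A g Q)}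
         = {(1 - P a) + real (gdist E a b) + (1 - Q b) | a b. a \<in> supp P \<and> b \<in> supp Q}"
  proof (rule equalityI; rule subsetI)
    fix y assume "y \<in> {(1 - A g P a) + real (gdist E a b) + (1 - A g Q b) | a b. a \<in> supp (A g P) \<and> b \<in> supp (A g Q)}"
    then obtain a' b' where ab': "a' \<in> supp (A g P)" "b' \<in> supp (A g Q)" "y = (1 - A g P a') + real (gdist E a' b') + (1 - A g Q b')"
      by blast
    obtain a where a: "a \<in> supp P" "a' = \<sigma> a" using ab'(1) sP by blast
    obtain b where b: "b \<in> supp Q" "b' = \<sigma> b" using ab'(2) sP by blast
    have ab: "a \<in> supp P" "b \<in> supp Q" "y = (1 - A g P (\<sigma> a)) + real (gdist E (\<sigma> a) (\<sigma> b)) + (1 - A g Q (\<sigma> b))"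
      using a b ab' by auto
    then have "y = (1 - P a) + real (gdist E a b) + (1 - Q b)" using AP s1 dd by simp
    then show "y \<in> {(1 - P a) + real (gdist E a b) + (1 - Q b) | a b. a \<in> supp P \<and> b \<in> supp Q}" using ab by blast
  next
    fix y assume "y \<in> {(1 - P a) + real (gdist E a b) + (1 - Q b) | a b. a \<in> supp P \<and> b \<in> supp Q}"
    then obtain a b where ab: "a \<in> supp P" "b \<in> supp Q" "y = (1 - P a) + real (gdist E a b) + (1 - Q b)" by blast
    then have "y = (1 - A g P (\<sigma> a)) + real (gdist E (\<sigma> a) (\<sigma> b)) + (1 - A g Q (\<sigma> b))" using AP s1 dd by simp
    moreover have "\<sigma> a \<in> supp (A g P)" "\<sigma> b \<in> supp (A g Q)" using ab sP by auto
    ultimately show "y \<in> {(1 - A g P a) + real (gdist E a b) + (1 - A g Q b) | a b. a \<in> supp (A g P) \<and> b \<in> supp (A g Q)}" by blast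
  qed
  show ?thesis unfolding tdist_def by (simp only: C S M)
qed

lemma pow_nat_transl:
  assumes g: "g \<in> carrier G" and T: "\<And>s. A g (\<gamma> s) = \<gamma> (s + \<tau>)"
  shows "A (g [^]\<^bsub>G\<^esub> (n::nat)) (\<gamma> s) = \<gamma> (s + real n * \<tau>)"
proof (induction n arbitrary: s)
  case 0
  then show ?case using A_one by simp
next
  case (Suc n)
  have "A (g [^]\<^bsub>G\<^esub> Suc n) (\<gamma> s) = A (g [^]\<^bsub>G\<^esub> n) (A g (\<gamma> s))"
    using A_mult[of "g [^]\<^bsub>G\<^esub> n" g] g monoid.nat_pow_closed[OF group.is_monoid[OF grp]] by simp
  also have "\<dots> = \<gamma> (s + \<tau> + real n * \<tau>)" using T Suc.IH by simp
  finally show ?case by (simp add: algebra_simps)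
qed

lemma pow_int_transl:
  assumes g: "g \<in> carrier G" and T: "\<And>s. A g (\<gamma> s) = \<gamma> (s + \<tau>)"
  shows "A (g [^]\<^bsub>G\<^esub> (n::int)) (\<gamma> s) = \<gamma> (s + real_of_int n * \<tau>)"
proof (cases "n \<ge> 0")
  case True
  then obtain k where "n = int k" by (metis nonneg_eq_int)
  then show ?thesis using pow_nat_transl[where \<gamma>=\<gamma> and \<tau>=\<tau> and n=k, OF g T] by (simp add: int_pow_int)
next
  case False
  define k where "k = nat (- n)"
  have k: "n = - int k" using False unfolding k_def by simp
  have gk: "g [^]\<^bsub>G\<^esub> k \<in> carrier G" using monoid.nat_pow_closed[OF group.is_monoid[OF grp] g] .
  have "g [^]\<^bsub>G\<^esub> n = inv\<^bsub>G\<^esub> (g [^]\<^bsub>G\<^esub> k)" using group.int_pow_neg_int[OF grp g] k by simp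
  moreover have "\<gamma> s = A (g [^]\<^bsub>G\<^esub> k) (\<gamma> (s - real k * \<tau>))" using pow_nat_transl[where \<gamma>=\<gamma> and \<tau>=\<tau> and n=k, OF g T] by simp
  ultimately have "A (g [^]\<^bsub>G\<^esub> n) (\<gamma> s) = A (inv\<^bsub>G\<^esub> (g [^]\<^bsub>G\<^esub> k)) (A (g [^]\<^bsub>G\<^esub> k) (\<gamma> (s - real k * \<tau>)))"
    by simp
  then have "A (g [^]\<^bsub>G\<^esub> n) (\<gamma> s) = \<gamma> (s - real k * \<tau>)" using A_inv1[OF gk] by simp
  then show ?thesis using k by simp
qed

end


locale mainctx =
  fixes G :: "('g, 'm) monoid_scheme" and \<phi> :: "'g \<Rightarrow> 'b \<Rightarrow> 'b" and ET :: "'b \<Rightarrow> 'b \<Rightarrow> bool"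
    and \<psi> :: "'g \<Rightarrow> 'a \<Rightarrow> 'a" and EXg :: "'a \<Rightarrow> 'a \<Rightarrow> bool" and \<pi> :: "'a \<Rightarrow> ('b \<Rightarrow> real)"
    and \<kappa> :: nat
  assumes grp: "group G" and tf: "torsion_free G"
    and tree: "simplicial_tree ET" and gaT: "graph_aut_action G \<phi> ET" and acyl: "acylindrical G \<phi> ET \<kappa>"
    and symX: "sym_graph EXg" and connX: "gconnected EXg" and gaX: "graph_aut_action G \<psi> EXg"
    and piR: "\<forall>x. \<pi> x \<in> realization ET"
    and lip: "\<forall>x y. tdist ET (\<pi> x) (\<pi> y) \<le> real (gdist EXg x y)"
    and equi: "\<forall>g\<in>carrier G. \<forall>x. \<pi> (\<psi> g x) = act_pt G \<phi> g (\<pi> x)"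
begin

lemma stT: "stree ET" using stree_of[OF tree] .
lemma cgT: "cgraph ET" using stT unfolding stree_def by blast
lemma cgX: "cgraph EXg" unfolding cgraph_def using symX connX by blast

sublocale T: rtree ET undefined
  using stT by (simp add: rtree_def)

sublocale TA: gaa G \<phi> ET unfolding gaa_def using grp gaT by blast
sublocale XA: gaa G \<psi> EXg unfolding gaa_def using grp gaX by blast
sublocale X: cgraph EXg by (rule cgX)

lemma sq_fix:
  assumes k: "k \<in> carrier G" and R: "R \<in> T.RR" and f: "TA.A k R = R" and x: "x \<in> supp R"
  shows "\<phi> (k \<otimes>\<^bsub>G\<^esub> k) x = x"
proof -
  have ik: "inv\<^bsub>G\<^esub> k \<in> carrier G" using group.inv_closed[OF grp k] .
  define \<sigma> where "\<sigma> = \<phi> (inv\<^bsub>G\<^esub> k)"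
  have R\<sigma>: "R (\<sigma> w) = R w" for w using fun_cong[OF f, of w] unfolding act_pt_def \<sigma>_def by simp
  have ss: "\<sigma> w \<in> supp R" if "w \<in> supp R" for w using that R\<sigma> unfolding supp_def by simp
  have inj: "\<sigma> a = \<sigma> b \<Longrightarrow> a = b" for a b unfolding \<sigma>_def using TA.inj[OF ik] by blast
  have "\<sigma> (\<sigma> x) = x"
  proof (cases "\<sigma> x = x")
    case True then show ?thesis by simp
  next
    case False
    define y where "y = \<sigma> x"
    have y: "y \<in> supp R" "\<sigma> y \<in> supp R" using ss x y_def by auto
    have "\<sigma> y \<noteq> y" using inj False y_def by metis
    show ?thesis
    proof (rule ccontr)
      assume "\<sigma> (\<sigma> x) \<noteq> x"
      then have "\<sigma> y \<noteq> x" using y_def by simp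
      then have "card {x, y, \<sigma> y} = 3" using False \<open>\<sigma> y \<noteq> y\<close> y_def by auto
      moreover have "card {x, y, \<sigma> y} \<le> card (supp R)"
        using T.supp_fin[OF R] y x by (intro card_mono) auto
      ultimately show False using T.supp_fin(2)[OF R] by simp
    qed
  qed
  have "\<phi> (k \<otimes>\<^bsub>G\<^esub> k) x = \<phi> k (\<phi> k (\<sigma> (\<sigma> x)))" using TA.mult[OF k k] \<open>\<sigma> (\<sigma> x) = x\<close> by simp
  also have "\<dots> = x" unfolding \<sigma>_def using TA.inv2[OF k] by simp
  finally show ?thesis .
qed

lemma fix_trivial:
  assumes k: "k \<in> carrier G" and P: "P \<in> T.RR" and Q: "Q \<in> T.RR"
    and fP: "TA.A k P = P" and fQ: "TA.A k Q = Q" and far: "real \<kappa> + 3 \<le> T.D P Q"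
  shows "k = \<one>\<^bsub>G\<^esub>"
proof -
  obtain x where x: "x \<in> supp P" using T.supp_ne[OF P] by blast
  obtain y where y: "y \<in> supp Q" using T.supp_ne[OF Q] by blast
  define k2 where "k2 = k \<otimes>\<^bsub>G\<^esub> k"
  have k2: "k2 \<in> carrier G" unfolding k2_def using k monoid.m_closed[OF group.is_monoid[OF grp]] by blast
  have fx: "\<phi> k2 x = x" unfolding k2_def using sq_fix[OF k P fP x] .
  have fy: "\<phi> k2 y = y" unfolding k2_def using sq_fix[OF k Q fQ y] .
  have "T.D P Q \<le> real (T.d x y) + 2" using T.D_supp_bound[OF P Q x y] .
  then have dxy: "\<kappa> + 1 \<le> T.d x y" using far by simp
  obtain xs where xs: "is_walk ET xs" "hd xs = x" "last xs = y" "length xs = Suc (T.d x y)"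
    "\<forall>i \<le> T.d x y. T.d x (xs ! i) = i \<and> T.d (xs ! i) y = T.d x y - i"
    using T.d_geo_walk by blast
  have fixd: "\<phi> k2 (xs ! i) = xs ! i" if i: "i \<le> T.d x y" for i
  proof -
    define z where "z = xs ! i"
    define z' where "z' = \<phi> k2 z"
    have dz: "T.d x z = i" "T.d z y = T.d x y - i" using xs(5) i z_def by auto
    have "T.d x z' = T.d (\<phi> k2 x) (\<phi> k2 z)" using fx z'_def by simp
    also have "\<dots> = T.d x z" using TA.dist[OF cgT k2] .
    finally have dz1: "T.d x z' = i" using dz by simp
    have "T.d z' y = T.d (\<phi> k2 z) (\<phi> k2 y)" using fy z'_def by simp
    also have "\<dots> = T.d z y" using TA.dist[OF cgT k2] .
    finally have dz2: "T.d z' y = T.d x y - i" using dz by simp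
    have b1: "T.betw (vtx x) (vtx z) (vtx y)" unfolding T.betw_def T.D_vv using dz i by simp
    have b2: "T.betw (vtx x) (vtx z') (vtx y)" unfolding T.betw_def T.D_vv using dz1 dz2 i by simp
    have "T.D (vtx x) (vtx z) = T.D (vtx x) (vtx z')" unfolding T.D_vv using dz dz1 by simp
    then have "vtx z = vtx z'" using T.geo_unique[of "vtx x" "vtx y" "vtx z" "vtx z'"] b1 b2 by simp
    then show ?thesis using vtx_inj z_def z'_def by metis
  qed
  have dist: "distinct xs" unfolding distinct_conv_nth
  proof (intro allI impI)
    fix i j assume "i < length xs" "j < length xs" "i \<noteq> j"
    then have "T.d x (xs ! i) = i" "T.d x (xs ! j) = j" using xs(4,5) by auto
    then show "xs ! i \<noteq> xs ! j" using \<open>i \<noteq> j\<close> by metis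
  qed
  have "\<forall>v\<in>set xs. \<phi> k2 v = v"
  proof
    fix v assume "v \<in> set xs"
    then obtain i where "i < length xs" "v = xs ! i" by (metis in_set_conv_nth)
    then show "\<phi> k2 v = v" using fixd xs(4) by simp
  qed
  moreover have "\<kappa> + 2 \<le> length xs" using xs(4) dxy by simp
  ultimately have "k2 = \<one>\<^bsub>G\<^esub>" using acyl xs(1) dist k2 unfolding acylindrical_def by blast
  moreover have "k [^]\<^bsub>G\<^esub> (2::nat) = k2" unfolding k2_def numeral_2_eq_2
    using k monoid.l_one[OF group.is_monoid[OF grp]] by simp
  ultimately show ?thesis using tf k unfolding torsion_free_def by force
qed

end


context mainctx
begin

lemma axis_line: "is_axis G \<phi> ET g Al \<Longrightarrow> \<exists>\<gamma>. T.isoline \<gamma> \<and> Al = range \<gamma>"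
  unfolding is_axis_def bi_infinite_geodesic_def T.isoline_def by blast

lemma axis_inv: "is_axis G \<phi> ET g Al \<Longrightarrow> TA.A g ` Al = Al"
  unfolding is_axis_def by blast

lemma lox_disp:
  assumes g: "g \<in> carrier G" and lx: "loxodromic G \<phi> ET g"
  shows "\<exists>lb>0. \<forall>P\<in>T.RR. lb \<le> T.D P (TA.A g P)"
proof -
  define lb where "lb = (INF p\<in>T.RR. T.D p (TA.A g p))"
  have pos: "lb > 0" using lx unfolding loxodromic_def lb_def by simp
  have bdd: "bdd_below ((\<lambda>p. T.D p (TA.A g p)) ` T.RR)"
    by (rule bdd_belowI[of _ 0]) (use T.D_nonneg TA.A_real[OF g] in auto)
  have "\<forall>P\<in>T.RR. lb \<le> T.D P (TA.A g P)" unfolding lb_def using cINF_lower[OF bdd] by blast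
  then show ?thesis using pos by blast
qed

lemma axis_transl:
  assumes g: "g \<in> carrier G" and lx: "loxodromic G \<phi> ET g"
    and L: "T.isoline \<gamma>" and inv: "TA.A g ` range \<gamma> = range \<gamma>"
  shows "\<exists>ti::int. ti \<noteq> 0 \<and> (\<forall>s. TA.A g (\<gamma> s) = \<gamma> (s + real_of_int ti))"
proof -
  obtain lb where lb: "lb > 0" "\<And>P. P \<in> T.RR \<Longrightarrow> lb \<le> T.D P (TA.A g P)" using lox_disp[OF g lx] by blast
  obtain \<tau> where \<tau>: "lb \<le> \<bar>\<tau>\<bar>" "\<And>s. TA.A g (\<gamma> s) = \<gamma> (s + \<tau>)"
    using T.line_transl[OF L TA.A_real[OF g] TA.A_iso[OF cgT g] inv lb(2) lb(1)] by blast
  obtain s1 u where su: "\<gamma> s1 = vtx u" using T.line_vertex[OF L] by blast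
  have "\<gamma> (s1 + \<tau>) = vtx (\<phi> g u)" using \<tau>(2)[of s1] su TA.A_vtx[OF g] by simp
  then have "\<bar>\<tau>\<bar> = real (T.d u (\<phi> g u))" using T.isolineD(2)[OF L, of s1 "s1 + \<tau>"] su T.D_vv by simp
  then obtain n :: nat where n: "\<tau> = real n \<or> \<tau> = - real n" by (metis abs_if minus_minus)
  define ti :: int where "ti = (if \<tau> \<ge> 0 then int n else - int n)"
  have "real_of_int ti = \<tau>" using n unfolding ti_def by auto
  moreover have "\<tau> \<noteq> 0" using \<tau>(1) lb(1) by auto
  ultimately show ?thesis using \<tau>(2) by (intro exI[of _ ti]) auto
qed

lemma axis_unique:
  assumes g: "g \<in> carrier G" and lx: "loxodromic G \<phi> ET g"
    and A1: "is_axis G \<phi> ET g A1" and A2: "is_axis G \<phi> ET g A2"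
  shows "A1 = A2"
proof -
  obtain \<gamma> where \<gamma>: "T.isoline \<gamma>" "A1 = range \<gamma>" using axis_line[OF A1] by blast
  obtain \<eta> where \<eta>: "T.isoline \<eta>" "A2 = range \<eta>" using axis_line[OF A2] by blast
  obtain ti :: int where ti: "ti \<noteq> 0" "\<And>s. TA.A g (\<gamma> s) = \<gamma> (s + real_of_int ti)"
    using axis_transl[OF g lx \<gamma>(1)] axis_inv[OF A1] \<gamma>(2) by blast
  obtain si :: int where si: "si \<noteq> 0" "\<And>s. TA.A g (\<eta> s) = \<eta> (s + real_of_int si)"
    using axis_transl[OF g lx \<eta>(1)] axis_inv[OF A2] \<eta>(2) by blast
  have "range \<eta> \<subseteq> range \<gamma>"
    using T.line_unique[OF \<gamma>(1) \<eta>(1) TA.A_real[OF g] TA.A_iso[OF cgT g] ti(2) _ si(2)] ti(1) si(1) by simp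
  moreover have "range \<gamma> \<subseteq> range \<eta>"
    using T.line_unique[OF \<eta>(1) \<gamma>(1) TA.A_real[OF g] TA.A_iso[OF cgT g] si(2) _ ti(2)] ti(1) si(1) by simp
  ultimately show ?thesis using \<gamma>(2) \<eta>(2) by blast
qed

lemma axis_conj:
  assumes g: "g \<in> carrier G" and k: "k \<in> carrier G" and Ax: "is_axis G \<phi> ET g Al"
  shows "is_axis G \<phi> ET (k \<otimes>\<^bsub>G\<^esub> g \<otimes>\<^bsub>G\<^esub> inv\<^bsub>G\<^esub> k) (TA.A k ` Al)"
proof -
  obtain \<gamma> where \<gamma>: "T.isoline \<gamma>" "Al = range \<gamma>" using axis_line[OF Ax] by blast
  define \<gamma>' where "\<gamma>' = (\<lambda>s. TA.A k (\<gamma> s))"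
  have "\<forall>s. \<gamma>' s \<in> T.RR" unfolding \<gamma>'_def using TA.A_real[OF k] T.isolineD(1)[OF \<gamma>(1)] by blast
  moreover have "\<forall>s t. T.D (\<gamma>' s) (\<gamma>' t) = \<bar>s - t\<bar>" unfolding \<gamma>'_def
    using TA.A_iso[OF cgT k] T.isolineD(2)[OF \<gamma>(1)] by simp
  moreover have "TA.A k ` Al = range \<gamma>'" unfolding \<gamma>'_def \<gamma>(2) by auto
  ultimately have bg: "bi_infinite_geodesic ET (TA.A k ` Al)" unfolding bi_infinite_geodesic_def by blast
  have ik: "inv\<^bsub>G\<^esub> k \<in> carrier G" using group.inv_closed[OF grp k] .
  have kg: "k \<otimes>\<^bsub>G\<^esub> g \<in> carrier G" using monoid.m_closed[OF group.is_monoid[OF grp] k g] .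
  have eq: "TA.A (k \<otimes>\<^bsub>G\<^esub> g \<otimes>\<^bsub>G\<^esub> inv\<^bsub>G\<^esub> k) (TA.A k P) = TA.A k (TA.A g P)" for P
  proof -
    have "TA.A (k \<otimes>\<^bsub>G\<^esub> g \<otimes>\<^bsub>G\<^esub> inv\<^bsub>G\<^esub> k) (TA.A k P) = TA.A (k \<otimes>\<^bsub>G\<^esub> g) (TA.A (inv\<^bsub>G\<^esub> k) (TA.A k P))"
      using TA.A_mult[OF kg ik] by simp
    also have "\<dots> = TA.A (k \<otimes>\<^bsub>G\<^esub> g) P" using TA.A_inv1[OF k] by simp
    also have "\<dots> = TA.A k (TA.A g P)" using TA.A_mult[OF k g] by simp
    finally show ?thesis .
  qed
  have "TA.A (k \<otimes>\<^bsub>G\<^esub> g \<otimes>\<^bsub>G\<^esub> inv\<^bsub>G\<^esub> k) ` (TA.A k ` Al) = TA.A k ` (TA.A g ` Al)"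
    by (simp add: image_image eq)
  also have "\<dots> = TA.A k ` Al" using axis_inv[OF Ax] by simp
  finally show ?thesis unfolding is_axis_def using bg by blast
qed

lemma Xpow_nat:
  assumes g: "g \<in> carrier G"
  shows "X.d x (\<psi> (g [^]\<^bsub>G\<^esub> (n::nat)) x) \<le> n * X.d x (\<psi> g x)"
proof (induction n)
  case 0
  then show ?case using XA.one by simp
next
  case (Suc n)
  have gn: "g [^]\<^bsub>G\<^esub> n \<in> carrier G" using monoid.nat_pow_closed[OF group.is_monoid[OF grp] g] .
  have "\<psi> (g [^]\<^bsub>G\<^esub> Suc n) x = \<psi> (g [^]\<^bsub>G\<^esub> n) (\<psi> g x)" using XA.mult[OF gn g] by simp
  moreover have "X.d x (\<psi> (g [^]\<^bsub>G\<^esub> n) (\<psi> g x)) \<le> X.d x (\<psi> (g [^]\<^bsub>G\<^esub> n) x) + X.d (\<psi> (g [^]\<^bsub>G\<^esub> n) x) (\<psi> (g [^]\<^bsub>G\<^esub> n) (\<psi> g x))"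
    by (rule X.d_tri)
  moreover have "X.d (\<psi> (g [^]\<^bsub>G\<^esub> n) x) (\<psi> (g [^]\<^bsub>G\<^esub> n) (\<psi> g x)) = X.d x (\<psi> g x)"
    using XA.dist[OF cgX gn] .
  ultimately show ?case using Suc.IH by simp
qed

lemma Xpow_int:
  assumes g: "g \<in> carrier G"
  shows "real (X.d x (\<psi> (g [^]\<^bsub>G\<^esub> (n::int)) x)) \<le> real_of_int \<bar>n\<bar> * real (X.d x (\<psi> g x))"
proof (cases "n \<ge> 0")
  case True
  then obtain k where k: "n = int k" by (metis nonneg_eq_int)
  have "X.d x (\<psi> (g [^]\<^bsub>G\<^esub> n) x) \<le> k * X.d x (\<psi> g x)" using Xpow_nat[OF g, of x k] k by (simp add: int_pow_int)
  then have "real (X.d x (\<psi> (g [^]\<^bsub>G\<^esub> n) x)) \<le> real k * real (X.d x (\<psi> g x))"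
    by (metis of_nat_le_iff of_nat_mult)
  then show ?thesis using k by simp
next
  case False
  define k where "k = nat (- n)"
  have k: "n = - int k" using False unfolding k_def by simp
  have gk: "g [^]\<^bsub>G\<^esub> k \<in> carrier G" using monoid.nat_pow_closed[OF group.is_monoid[OF grp] g] .
  have "g [^]\<^bsub>G\<^esub> n = inv\<^bsub>G\<^esub> (g [^]\<^bsub>G\<^esub> k)" using group.int_pow_neg_int[OF grp g] k by simp
  then have "X.d x (\<psi> (g [^]\<^bsub>G\<^esub> n) x) = X.d (\<psi> (g [^]\<^bsub>G\<^esub> k) x) (\<psi> (g [^]\<^bsub>G\<^esub> k) (\<psi> (inv\<^bsub>G\<^esub> (g [^]\<^bsub>G\<^esub> k)) x))"
    using XA.dist[OF cgX gk] by simp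
  also have "\<dots> = X.d (\<psi> (g [^]\<^bsub>G\<^esub> k) x) x" using XA.inv2[OF gk] by simp
  also have "\<dots> = X.d x (\<psi> (g [^]\<^bsub>G\<^esub> k) x)" using X.d_sym by simp
  finally have "X.d x (\<psi> (g [^]\<^bsub>G\<^esub> n) x) \<le> k * X.d x (\<psi> g x)" using Xpow_nat[OF g, of x k] by simp
  then have "real (X.d x (\<psi> (g [^]\<^bsub>G\<^esub> n) x)) \<le> real k * real (X.d x (\<psi> g x))"
    by (metis of_nat_le_iff of_nat_mult)
  then show ?thesis using k by simp
qed

end


context mainctx
begin

lemma no_long_overlap:
  assumes g: "g \<in> carrier G" and h: "h \<in> carrier G"
    and L1: "T.isoline \<gamma>" and L2: "T.isoline \<eta>"
    and Tg: "\<And>s. TA.A g (\<gamma> s) = \<gamma> (s + real_of_int ti)" and ti: "ti \<noteq> 0"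
    and Th: "\<And>s. TA.A h (\<eta> s) = \<eta> (s + real_of_int si)" and si: "si \<noteq> 0"
    and ncp: "\<not> (\<exists>(m::int) (n::int). g [^]\<^bsub>G\<^esub> m = h [^]\<^bsub>G\<^esub> n \<and> g [^]\<^bsub>G\<^esub> m \<noteq> \<one>\<^bsub>G\<^esub>)"
    and n1: "T.D (\<gamma> u1) (\<eta> v1) \<le> \<epsilon>" and n2: "T.D (\<gamma> u2) (\<eta> v2) \<le> \<epsilon>" and u12: "u1 \<le> u2"
  shows "u2 - u1 \<le> 2 * \<epsilon> + 2 * \<bar>real_of_int (ti * si)\<bar> + real \<kappa> + 4"
proof (rule ccontr)
  define N where "N = \<bar>real_of_int (ti * si)\<bar>"
  assume "\<not> u2 - u1 \<le> 2 * \<epsilon> + 2 * \<bar>real_of_int (ti * si)\<bar> + real \<kappa> + 4"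
  then have long: "2 * \<epsilon> + 2 * N + real \<kappa> + 4 < u2 - u1" unfolding N_def by simp
  have N0: "0 \<le> N" unfolding N_def by simp
  have "u1 + \<epsilon> < u2 - \<epsilon>" using long N0 by simp
  then obtain e c0 where e: "e = 1 \<or> e = -1"
    and ov: "\<And>s. u1 + \<epsilon> < s \<Longrightarrow> s < u2 - \<epsilon> \<Longrightarrow> \<gamma> s = \<eta> (c0 + e * s)"
    using T.overlap_affine[OF L1 L2 n1 n2] by blast
  define ei :: int where "ei = (if e = 1 then 1 else -1)"
  have ei: "real_of_int ei = e" "e * e = 1" using e unfolding ei_def by auto
  define hx where "hx = h [^]\<^bsub>G\<^esub> (- (ei * ti))"
  define gx where "gx = g [^]\<^bsub>G\<^esub> si"
  have hxc: "hx \<in> carrier G" unfolding hx_def using group.int_pow_closed[OF grp h] .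
  have gxc: "gx \<in> carrier G" unfolding gx_def using group.int_pow_closed[OF grp g] .
  define k where "k = gx \<otimes>\<^bsub>G\<^esub> hx"
  have kc: "k \<in> carrier G" unfolding k_def using monoid.m_closed[OF group.is_monoid[OF grp] gxc hxc] .
  have fixk: "TA.A k (\<gamma> s) = \<gamma> s" if s: "u1 + \<epsilon> + N < s" "s < u2 - \<epsilon> - N" for s
  proof -
    have tsN: "\<bar>real_of_int ti * real_of_int si\<bar> = N" unfolding N_def by simp
    have s1: "u1 + \<epsilon> < s" "s < u2 - \<epsilon>" using s N0 by auto
    have s2: "u1 + \<epsilon> < s - real_of_int ti * real_of_int si" "s - real_of_int ti * real_of_int si < u2 - \<epsilon>"
      using s tsN by (auto simp: abs_if split: if_splits)
    have "TA.A hx (\<gamma> s) = TA.A hx (\<eta> (c0 + e * s))" using ov[OF s1] by simp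
    also have "\<dots> = \<eta> (c0 + e * s + real_of_int (- (ei * ti)) * real_of_int si)"
      unfolding hx_def by (rule TA.pow_int_transl[where \<gamma>=\<eta> and \<tau>="real_of_int si", OF h Th])
    also have "c0 + e * s + real_of_int (- (ei * ti)) * real_of_int si = c0 + e * (s - real_of_int ti * real_of_int si)"
      using ei(1) by (simp add: algebra_simps)
    also have "\<eta> \<dots> = \<gamma> (s - real_of_int ti * real_of_int si)" using ov[OF s2] by simp
    finally have 1: "TA.A hx (\<gamma> s) = \<gamma> (s - real_of_int ti * real_of_int si)" .
    have "TA.A gx (\<gamma> (s - real_of_int ti * real_of_int si)) = \<gamma> (s - real_of_int ti * real_of_int si + real_of_int si * real_of_int ti)"
      unfolding gx_def by (rule TA.pow_int_transl[where \<gamma>=\<gamma> and \<tau>="real_of_int ti", OF g Tg])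
    then have 2: "TA.A gx (\<gamma> (s - real_of_int ti * real_of_int si)) = \<gamma> s" by (simp add: algebra_simps)
    show ?thesis unfolding k_def using TA.A_mult[OF gxc hxc] 1 2 by simp
  qed
  define sa where "sa = u1 + \<epsilon> + N + 1"
  define sb where "sb = sa + real \<kappa> + 3"
  have "TA.A k (\<gamma> sa) = \<gamma> sa" using fixk long N0 unfolding sa_def by simp
  moreover have "TA.A k (\<gamma> sb) = \<gamma> sb" using fixk long N0 unfolding sb_def sa_def by simp
  moreover have "T.D (\<gamma> sa) (\<gamma> sb) = real \<kappa> + 3" using T.isolineD(2)[OF L1] unfolding sb_def by simp
  ultimately have "k = \<one>\<^bsub>G\<^esub>"
    using fix_trivial[OF kc T.isolineD(1)[OF L1] T.isolineD(1)[OF L1], of sa sb] by simp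
  then have "gx \<otimes>\<^bsub>G\<^esub> hx = \<one>\<^bsub>G\<^esub>" unfolding k_def .
  then have "inv\<^bsub>G\<^esub> hx = gx" using group.inv_equality[OF grp _ hxc gxc] by blast
  moreover have "inv\<^bsub>G\<^esub> hx = h [^]\<^bsub>G\<^esub> (ei * ti)"
    unfolding hx_def using group.int_pow_neg[OF grp h, of "ei * ti"] group.inv_inv[OF grp] group.int_pow_closed[OF grp h] by simp
  ultimately have eq: "g [^]\<^bsub>G\<^esub> si = h [^]\<^bsub>G\<^esub> (ei * ti)" unfolding gx_def by simp
  have "g [^]\<^bsub>G\<^esub> si \<noteq> \<one>\<^bsub>G\<^esub>"
  proof
    assume "g [^]\<^bsub>G\<^esub> si = \<one>\<^bsub>G\<^esub>"
    then have "TA.A (g [^]\<^bsub>G\<^esub> si) (\<gamma> 0) = \<gamma> 0" using TA.A_one by simp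
    moreover have "TA.A (g [^]\<^bsub>G\<^esub> si) (\<gamma> 0) = \<gamma> (0 + real_of_int si * real_of_int ti)"
      by (rule TA.pow_int_transl[where \<gamma>=\<gamma> and \<tau>="real_of_int ti", OF g Tg])
    ultimately have "T.D (\<gamma> 0) (\<gamma> (real_of_int si * real_of_int ti)) = 0" using T.D_self T.isolineD(1)[OF L1] by simp
    then show False using T.isolineD(2)[OF L1] si ti by simp
  qed
  then show False using ncp eq by blast
qed

end


context mainctx
begin

lemma group_id1:
  assumes "k \<in> carrier G" "g0 \<in> carrier G"
  shows "inv\<^bsub>G\<^esub> k \<otimes>\<^bsub>G\<^esub> (k \<otimes>\<^bsub>G\<^esub> g0 \<otimes>\<^bsub>G\<^esub> inv\<^bsub>G\<^esub> k) \<otimes>\<^bsub>G\<^esub> inv\<^bsub>G\<^esub> (inv\<^bsub>G\<^esub> k) = g0"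
proof -
  interpret Gr: group G by (rule grp)
  show ?thesis using assms by (simp add: Gr.m_assoc[symmetric] Gr.inv_inv) (simp add: Gr.m_assoc)
qed

lemma group_id2:
  assumes "k \<in> carrier G" "g0 \<in> carrier G"
  shows "(k \<otimes>\<^bsub>G\<^esub> g0 \<otimes>\<^bsub>G\<^esub> inv\<^bsub>G\<^esub> k) \<otimes>\<^bsub>G\<^esub> k = k \<otimes>\<^bsub>G\<^esub> g0"
proof -
  interpret Gr: group G by (rule grp)
  show ?thesis using assms by (simp add: Gr.m_assoc)
qed

lemma group_id3:
  assumes "g \<in> carrier G"
  shows "inv\<^bsub>G\<^esub> (g [^]\<^bsub>G\<^esub> (m1::int)) \<otimes>\<^bsub>G\<^esub> g [^]\<^bsub>G\<^esub> m2 = g [^]\<^bsub>G\<^esub> (m2 - m1)"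
proof -
  interpret Gr: group G by (rule grp)
  have "g [^]\<^bsub>G\<^esub> (- m1 + m2) = g [^]\<^bsub>G\<^esub> (- m1) \<otimes>\<^bsub>G\<^esub> g [^]\<^bsub>G\<^esub> m2" using Gr.int_pow_mult[OF assms] .
  then show ?thesis using Gr.int_pow_neg[OF assms] by simp
qed

lemma c_bound:
  assumes k1: "k1 \<in> carrier G" and g0: "g0 \<in> carrier G"
    and gdef: "g = k1 \<otimes>\<^bsub>G\<^esub> g0 \<otimes>\<^bsub>G\<^esub> inv\<^bsub>G\<^esub> k1"
    and lx: "loxodromic G \<phi> ET g" and ax: "is_axis G \<phi> ET g Ag" and x0: "\<pi> x0 \<in> Ag"
    and xmin: "\<forall>x. \<pi> x \<in> Ag \<longrightarrow> gdist EXg (\<psi> g x0) x0 \<le> gdist EXg (\<psi> g x) x"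
  shows "gdist EXg (\<psi> g x0) x0 \<le> gdist EXg (\<psi> g0 (SOME x. \<exists>Al. is_axis G \<phi> ET g0 Al \<and> \<pi> x \<in> Al))
                                        (SOME x. \<exists>Al. is_axis G \<phi> ET g0 Al \<and> \<pi> x \<in> Al)"
proof -
  define xs where "xs = (SOME x. \<exists>Al. is_axis G \<phi> ET g0 Al \<and> \<pi> x \<in> Al)"
  have ik: "inv\<^bsub>G\<^esub> k1 \<in> carrier G" using group.inv_closed[OF grp k1] .
  have gc: "g \<in> carrier G" unfolding gdef using k1 g0 ik monoid.m_closed[OF group.is_monoid[OF grp]] by blast
  have "is_axis G \<phi> ET (inv\<^bsub>G\<^esub> k1 \<otimes>\<^bsub>G\<^esub> g \<otimes>\<^bsub>G\<^esub> inv\<^bsub>G\<^esub> (inv\<^bsub>G\<^esub> k1)) (TA.A (inv\<^bsub>G\<^esub> k1) ` Ag)"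
    using axis_conj[OF gc ik ax] .
  then have ax0: "is_axis G \<phi> ET g0 (TA.A (inv\<^bsub>G\<^esub> k1) ` Ag)" using group_id1[OF k1 g0] gdef by simp
  have "\<pi> (\<psi> (inv\<^bsub>G\<^esub> k1) x0) = TA.A (inv\<^bsub>G\<^esub> k1) (\<pi> x0)" using equi ik by blast
  then have "\<pi> (\<psi> (inv\<^bsub>G\<^esub> k1) x0) \<in> TA.A (inv\<^bsub>G\<^esub> k1) ` Ag" using x0 by simp
  then have "\<exists>x Al. is_axis G \<phi> ET g0 Al \<and> \<pi> x \<in> Al" using ax0 by blast
  then have "\<exists>Al. is_axis G \<phi> ET g0 Al \<and> \<pi> xs \<in> Al" unfolding xs_def by (rule someI_ex)
  then obtain As where As: "is_axis G \<phi> ET g0 As" "\<pi> xs \<in> As" by blast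
  have "is_axis G \<phi> ET g (TA.A k1 ` As)" using axis_conj[OF g0 k1 As(1)] gdef by simp
  then have "TA.A k1 ` As = Ag" using axis_unique[OF gc lx _ ax] by blast
  moreover have "\<pi> (\<psi> k1 xs) = TA.A k1 (\<pi> xs)" using equi k1 by blast
  ultimately have "\<pi> (\<psi> k1 xs) \<in> Ag" using As(2) by blast
  then have "gdist EXg (\<psi> g x0) x0 \<le> gdist EXg (\<psi> g (\<psi> k1 xs)) (\<psi> k1 xs)" using xmin by blast
  also have "\<psi> g (\<psi> k1 xs) = \<psi> k1 (\<psi> g0 xs)"
  proof -
    have "\<psi> g (\<psi> k1 xs) = \<psi> (g \<otimes>\<^bsub>G\<^esub> k1) xs" using XA.mult[OF gc k1] by simp
    also have "g \<otimes>\<^bsub>G\<^esub> k1 = k1 \<otimes>\<^bsub>G\<^esub> g0" using group_id2[OF k1 g0] gdef by simp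
    also have "\<psi> (k1 \<otimes>\<^bsub>G\<^esub> g0) xs = \<psi> k1 (\<psi> g0 xs)" using XA.mult[OF k1 g0] by simp
    finally show ?thesis .
  qed
  also have "gdist EXg (\<psi> k1 (\<psi> g0 xs)) (\<psi> k1 xs) = gdist EXg (\<psi> g0 xs) xs" using XA.dist[OF cgX k1] .
  finally show ?thesis unfolding xs_def .
qed

lemma s_bound:
  assumes k2: "k2 \<in> carrier G" and h0: "h0 \<in> carrier G"
    and hdef: "h = k2 \<otimes>\<^bsub>G\<^esub> h0 \<otimes>\<^bsub>G\<^esub> inv\<^bsub>G\<^esub> k2"
    and lx: "loxodromic G \<phi> ET h" and ax: "is_axis G \<phi> ET h (range \<eta>)" and L: "T.isoline \<eta>"
    and Th: "\<And>s. TA.A h (\<eta> s) = \<eta> (s + \<sigma>)"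
  shows "\<bar>\<sigma>\<bar> = T.D (SOME P. \<exists>Al. is_axis G \<phi> ET h0 Al \<and> P \<in> Al)
                  (TA.A h0 (SOME P. \<exists>Al. is_axis G \<phi> ET h0 Al \<and> P \<in> Al))"
proof -
  define Ps where "Ps = (SOME P. \<exists>Al. is_axis G \<phi> ET h0 Al \<and> P \<in> Al)"
  have ik: "inv\<^bsub>G\<^esub> k2 \<in> carrier G" using group.inv_closed[OF grp k2] .
  have hc: "h \<in> carrier G" unfolding hdef using k2 h0 ik monoid.m_closed[OF group.is_monoid[OF grp]] by blast
  have "is_axis G \<phi> ET (inv\<^bsub>G\<^esub> k2 \<otimes>\<^bsub>G\<^esub> h \<otimes>\<^bsub>G\<^esub> inv\<^bsub>G\<^esub> (inv\<^bsub>G\<^esub> k2)) (TA.A (inv\<^bsub>G\<^esub> k2) ` range \<eta>)"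
    using axis_conj[OF hc ik ax] .
  then have ax0: "is_axis G \<phi> ET h0 (TA.A (inv\<^bsub>G\<^esub> k2) ` range \<eta>)" using group_id1[OF k2 h0] hdef by simp
  have "TA.A (inv\<^bsub>G\<^esub> k2) (\<eta> 0) \<in> TA.A (inv\<^bsub>G\<^esub> k2) ` range \<eta>" by blast
  then have "\<exists>P Al. is_axis G \<phi> ET h0 Al \<and> P \<in> Al" using ax0 by blast
  then have "\<exists>Al. is_axis G \<phi> ET h0 Al \<and> Ps \<in> Al" unfolding Ps_def by (rule someI_ex)
  then obtain As where As: "is_axis G \<phi> ET h0 As" "Ps \<in> As" by blast
  have PsR: "Ps \<in> T.RR" using As axis_line T.isolineD(1) by blast
  have "is_axis G \<phi> ET h (TA.A k2 ` As)" using axis_conj[OF h0 k2 As(1)] hdef by simp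
  then have "TA.A k2 ` As = range \<eta>" using axis_unique[OF hc lx _ ax] by blast
  then obtain t where t: "TA.A k2 Ps = \<eta> t" using As(2) by blast
  have "\<bar>\<sigma>\<bar> = T.D (\<eta> t) (\<eta> (t + \<sigma>))" using T.isolineD(2)[OF L] by simp
  also have "\<eta> (t + \<sigma>) = TA.A h (TA.A k2 Ps)" using Th t by simp
  also have "TA.A h (TA.A k2 Ps) = TA.A k2 (TA.A h0 Ps)"
  proof -
    have "TA.A h (TA.A k2 Ps) = TA.A (h \<otimes>\<^bsub>G\<^esub> k2) Ps" using TA.A_mult[OF hc k2] by simp
    also have "h \<otimes>\<^bsub>G\<^esub> k2 = k2 \<otimes>\<^bsub>G\<^esub> h0" using group_id2[OF k2 h0] hdef by simp
    also have "TA.A (k2 \<otimes>\<^bsub>G\<^esub> h0) Ps = TA.A k2 (TA.A h0 Ps)" using TA.A_mult[OF k2 h0] by simp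
    finally show ?thesis .
  qed
  also have "T.D (\<eta> t) (TA.A k2 (TA.A h0 Ps)) = T.D Ps (TA.A h0 Ps)"
    using TA.A_iso[OF cgT k2] t[symmetric] by simp
  finally show ?thesis unfolding Ps_def .
qed

end


context mainctx
begin

lemma pair_bound:
  assumes g0: "g0 \<in> carrier G" and h0: "h0 \<in> carrier G"
    and k1: "k1 \<in> carrier G" and k2: "k2 \<in> carrier G"
    and gdef: "g = k1 \<otimes>\<^bsub>G\<^esub> g0 \<otimes>\<^bsub>G\<^esub> inv\<^bsub>G\<^esub> k1"
    and hdef: "h = k2 \<otimes>\<^bsub>G\<^esub> h0 \<otimes>\<^bsub>G\<^esub> inv\<^bsub>G\<^esub> k2"
    and lxg: "loxodromic G \<phi> ET g" and lxh: "loxodromic G \<phi> ET h"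
    and axg: "is_axis G \<phi> ET g Ag" and axh: "is_axis G \<phi> ET h Ah"
    and ncp: "\<not> (\<exists>(m::int) (n::int). g [^]\<^bsub>G\<^esub> m = h [^]\<^bsub>G\<^esub> n \<and> g [^]\<^bsub>G\<^esub> m \<noteq> \<one>\<^bsub>G\<^esub>)"
    and x0: "\<pi> x0 \<in> Ag"
    and xmin: "\<forall>x. \<pi> x \<in> Ag \<longrightarrow> gdist EXg (\<psi> g x0) x0 \<le> gdist EXg (\<psi> g x) x"
    and y0: "\<pi> y0 \<in> Ah"
    and y1: "y1 = \<psi> (h [^]\<^bsub>G\<^esub> (n1::int)) y0" and a1: "real (gdist EXg y1 (\<psi> (g [^]\<^bsub>G\<^esub> (m1::int)) x0)) \<le> \<epsilon>"
    and y2: "y2 = \<psi> (h [^]\<^bsub>G\<^esub> (n2::int)) y0" and a2: "real (gdist EXg y2 (\<psi> (g [^]\<^bsub>G\<^esub> (m2::int)) x0)) \<le> \<epsilon>"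
  shows "real (gdist EXg y1 y2) \<le> 2 * \<epsilon> +
     (2 * \<epsilon> + 2 * (real (gdist EXg (\<psi> g0 (SOME x. \<exists>Al. is_axis G \<phi> ET g0 Al \<and> \<pi> x \<in> Al))
                                        (SOME x. \<exists>Al. is_axis G \<phi> ET g0 Al \<and> \<pi> x \<in> Al))
           * T.D (SOME P. \<exists>Al. is_axis G \<phi> ET h0 Al \<and> P \<in> Al)
                  (TA.A h0 (SOME P. \<exists>Al. is_axis G \<phi> ET h0 Al \<and> P \<in> Al))) + real \<kappa> + 4)
     * real (gdist EXg (\<psi> g0 (SOME x. \<exists>Al. is_axis G \<phi> ET g0 Al \<and> \<pi> x \<in> Al))
                                        (SOME x. \<exists>Al. is_axis G \<phi> ET g0 Al \<and> \<pi> x \<in> Al))"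
proof -
  define C0 where "C0 = real (gdist EXg (\<psi> g0 (SOME x. \<exists>Al. is_axis G \<phi> ET g0 Al \<and> \<pi> x \<in> Al))
                                        (SOME x. \<exists>Al. is_axis G \<phi> ET g0 Al \<and> \<pi> x \<in> Al))"
  define S0 where "S0 = T.D (SOME P. \<exists>Al. is_axis G \<phi> ET h0 Al \<and> P \<in> Al)
                  (TA.A h0 (SOME P. \<exists>Al. is_axis G \<phi> ET h0 Al \<and> P \<in> Al))"
  define L0 where "L0 = 2 * \<epsilon> + 2 * (C0 * S0) + real \<kappa> + 4"
  have ik1: "inv\<^bsub>G\<^esub> k1 \<in> carrier G" using group.inv_closed[OF grp k1] .
  have ik2: "inv\<^bsub>G\<^esub> k2 \<in> carrier G" using group.inv_closed[OF grp k2] .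
  have gc: "g \<in> carrier G" unfolding gdef using k1 g0 ik1 monoid.m_closed[OF group.is_monoid[OF grp]] by blast
  have hc: "h \<in> carrier G" unfolding hdef using k2 h0 ik2 monoid.m_closed[OF group.is_monoid[OF grp]] by blast
  obtain \<gamma> where \<gamma>: "T.isoline \<gamma>" "Ag = range \<gamma>" using axis_line[OF axg] by blast
  obtain \<eta> where \<eta>: "T.isoline \<eta>" "Ah = range \<eta>" using axis_line[OF axh] by blast
  obtain ti :: int where ti: "ti \<noteq> 0" "\<And>s. TA.A g (\<gamma> s) = \<gamma> (s + real_of_int ti)"
    using axis_transl[OF gc lxg \<gamma>(1)] axis_inv[OF axg] \<gamma>(2) by blast
  obtain si :: int where si: "si \<noteq> 0" "\<And>s. TA.A h (\<eta> s) = \<eta> (s + real_of_int si)"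
    using axis_transl[OF hc lxh \<eta>(1)] axis_inv[OF axh] \<eta>(2) by blast
  obtain sq where sq: "\<pi> x0 = \<gamma> sq" using x0 \<gamma>(2) by blast
  obtain tp where tp: "\<pi> y0 = \<eta> tp" using y0 \<eta>(2) by blast
  define c where "c = gdist EXg (\<psi> g x0) x0"
  have cC: "real c \<le> C0" using c_bound[OF k1 g0 gdef lxg axg x0 xmin] unfolding c_def C0_def by simp
  have sS: "\<bar>real_of_int si\<bar> = S0" using s_bound[OF k2 h0 hdef lxh _ \<eta>(1) si(2)] axh \<eta>(2) unfolding S0_def by simp
  have S0nn: "0 \<le> S0" using sS by simp
  have tc: "\<bar>real_of_int ti\<bar> \<le> real c"
  proof -
    have "\<bar>real_of_int ti\<bar> = T.D (\<gamma> sq) (\<gamma> (sq + real_of_int ti))" using T.isolineD(2)[OF \<gamma>(1)] by simp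
    also have "\<gamma> (sq + real_of_int ti) = \<pi> (\<psi> g x0)" using ti(2)[of sq] sq equi gc by simp
    also have "T.D (\<gamma> sq) (\<pi> (\<psi> g x0)) \<le> real (gdist EXg x0 (\<psi> g x0))" using lip sq by metis
    also have "gdist EXg x0 (\<psi> g x0) = c" unfolding c_def using X.d_sym by simp
    finally show ?thesis .
  qed
  have Nb: "\<bar>real_of_int (ti * si)\<bar> \<le> C0 * S0"
  proof -
    have "\<bar>real_of_int (ti * si)\<bar> = \<bar>real_of_int ti\<bar> * \<bar>real_of_int si\<bar>" by (simp add: abs_mult)
    also have "\<dots> \<le> C0 * S0" using tc cC sS S0nn by (intro mult_mono) auto
    finally show ?thesis .
  qed
  have pg: "\<pi> (\<psi> (g [^]\<^bsub>G\<^esub> m) x0) = \<gamma> (sq + real_of_int m * real_of_int ti)" for m :: int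
  proof -
    have "g [^]\<^bsub>G\<^esub> m \<in> carrier G" using group.int_pow_closed[OF grp gc] .
    then have "\<pi> (\<psi> (g [^]\<^bsub>G\<^esub> m) x0) = TA.A (g [^]\<^bsub>G\<^esub> m) (\<gamma> sq)" using equi sq by simp
    also have "\<dots> = \<gamma> (sq + real_of_int m * real_of_int ti)"
      by (rule TA.pow_int_transl[where \<gamma>=\<gamma> and \<tau>="real_of_int ti", OF gc ti(2)])
    finally show ?thesis .
  qed
  have ph: "\<pi> (\<psi> (h [^]\<^bsub>G\<^esub> n) y0) = \<eta> (tp + real_of_int n * real_of_int si)" for n :: int
  proof -
    have "h [^]\<^bsub>G\<^esub> n \<in> carrier G" using group.int_pow_closed[OF grp hc] .
    then have "\<pi> (\<psi> (h [^]\<^bsub>G\<^esub> n) y0) = TA.A (h [^]\<^bsub>G\<^esub> n) (\<eta> tp)" using equi tp by simp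
    also have "\<dots> = \<eta> (tp + real_of_int n * real_of_int si)"
      by (rule TA.pow_int_transl[where \<gamma>=\<eta> and \<tau>="real_of_int si", OF hc si(2)])
    finally show ?thesis .
  qed
  define u1 where "u1 = sq + real_of_int m1 * real_of_int ti"
  define u2 where "u2 = sq + real_of_int m2 * real_of_int ti"
  define v1 where "v1 = tp + real_of_int n1 * real_of_int si"
  define v2 where "v2 = tp + real_of_int n2 * real_of_int si"
  have near: "T.D (\<gamma> (sq + real_of_int m * real_of_int ti)) (\<eta> (tp + real_of_int n * real_of_int si)) \<le> \<epsilon>"
    if "real (gdist EXg (\<psi> (h [^]\<^bsub>G\<^esub> n) y0) (\<psi> (g [^]\<^bsub>G\<^esub> m) x0)) \<le> \<epsilon>" for m n :: int
  proof -
    have "T.D (\<pi> (\<psi> (g [^]\<^bsub>G\<^esub> m) x0)) (\<pi> (\<psi> (h [^]\<^bsub>G\<^esub> n) y0)) \<le> real (gdist EXg (\<psi> (g [^]\<^bsub>G\<^esub> m) x0) (\<psi> (h [^]\<^bsub>G\<^esub> n) y0))"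
      using lip by blast
    then show ?thesis using that pg[of m] ph[of n] X.d_sym by simp
  qed
  have n1': "T.D (\<gamma> u1) (\<eta> v1) \<le> \<epsilon>" unfolding u1_def v1_def using near a1 y1 by simp
  have n2': "T.D (\<gamma> u2) (\<eta> v2) \<le> \<epsilon>" unfolding u2_def v2_def using near a2 y2 by simp
  have ub: "\<bar>u2 - u1\<bar> \<le> L0"
  proof (cases "u1 \<le> u2")
    case True
    then have "u2 - u1 \<le> 2 * \<epsilon> + 2 * \<bar>real_of_int (ti * si)\<bar> + real \<kappa> + 4"
      using no_long_overlap[OF gc hc \<gamma>(1) \<eta>(1) ti(2) ti(1) si(2) si(1) ncp n1' n2'] by simp
    then show ?thesis using True Nb unfolding L0_def by simp
  next
    case False
    then have "u1 - u2 \<le> 2 * \<epsilon> + 2 * \<bar>real_of_int (ti * si)\<bar> + real \<kappa> + 4"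
      using no_long_overlap[OF gc hc \<gamma>(1) \<eta>(1) ti(2) ti(1) si(2) si(1) ncp n2' n1'] by simp
    then show ?thesis using False Nb unfolding L0_def by simp
  qed
  have mb: "real_of_int \<bar>m2 - m1\<bar> \<le> L0"
  proof -
    have "\<bar>u2 - u1\<bar> = \<bar>real_of_int (m2 - m1)\<bar> * \<bar>real_of_int ti\<bar>"
      unfolding u1_def u2_def by (simp add: abs_mult[symmetric] algebra_simps)
    moreover have "1 \<le> \<bar>real_of_int ti\<bar>" using ti(1) by linarith
    ultimately have "\<bar>real_of_int (m2 - m1)\<bar> \<le> \<bar>u2 - u1\<bar>"
      by (metis abs_ge_zero mult_cancel_left1 mult_left_mono)
    then show ?thesis using ub by simp
  qed
  define aa1 where "aa1 = \<psi> (g [^]\<^bsub>G\<^esub> m1) x0"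
  define aa2 where "aa2 = \<psi> (g [^]\<^bsub>G\<^esub> m2) x0"
  have gm1: "g [^]\<^bsub>G\<^esub> m1 \<in> carrier G" "g [^]\<^bsub>G\<^esub> m2 \<in> carrier G" using group.int_pow_closed[OF grp gc] by auto
  have ij: "inv\<^bsub>G\<^esub> (g [^]\<^bsub>G\<^esub> m1) \<in> carrier G" using group.inv_closed[OF grp gm1(1)] .
  have daa: "real (gdist EXg aa1 aa2) \<le> real_of_int \<bar>m2 - m1\<bar> * real c"
  proof -
    have "gdist EXg aa1 aa2 = gdist EXg (\<psi> (inv\<^bsub>G\<^esub> (g [^]\<^bsub>G\<^esub> m1)) aa1) (\<psi> (inv\<^bsub>G\<^esub> (g [^]\<^bsub>G\<^esub> m1)) aa2)"
      using XA.dist[OF cgX ij] by simp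
    also have "\<psi> (inv\<^bsub>G\<^esub> (g [^]\<^bsub>G\<^esub> m1)) aa1 = x0" unfolding aa1_def using XA.inv1[OF gm1(1)] by simp
    also have "\<psi> (inv\<^bsub>G\<^esub> (g [^]\<^bsub>G\<^esub> m1)) aa2 = \<psi> (g [^]\<^bsub>G\<^esub> (m2 - m1)) x0"
      unfolding aa2_def using XA.mult[OF ij gm1(2)] group_id3[OF gc] by simp
    finally have "gdist EXg aa1 aa2 = gdist EXg x0 (\<psi> (g [^]\<^bsub>G\<^esub> (m2 - m1)) x0)" .
    moreover have "real (gdist EXg x0 (\<psi> (g [^]\<^bsub>G\<^esub> (m2 - m1)) x0)) \<le> real_of_int \<bar>m2 - m1\<bar> * real (gdist EXg x0 (\<psi> g x0))"
      using Xpow_int[OF gc] .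
    moreover have "gdist EXg x0 (\<psi> g x0) = c" unfolding c_def using X.d_sym by simp
    ultimately show ?thesis by simp
  qed
  have "gdist EXg y1 y2 \<le> gdist EXg y1 aa1 + gdist EXg aa1 y2" by (rule X.d_tri)
  moreover have "gdist EXg aa1 y2 \<le> gdist EXg aa1 aa2 + gdist EXg aa2 y2" by (rule X.d_tri)
  moreover have "gdist EXg aa2 y2 = gdist EXg y2 aa2" by (rule X.d_sym)
  ultimately have "real (gdist EXg y1 y2) \<le> real (gdist EXg y1 aa1) + real (gdist EXg aa1 aa2) + real (gdist EXg y2 aa2)"
    by linarith
  also have "\<dots> \<le> \<epsilon> + real_of_int \<bar>m2 - m1\<bar> * real c + \<epsilon>" using a1 a2 daa unfolding aa1_def aa2_def by linarith
  also have "real_of_int \<bar>m2 - m1\<bar> * real c \<le> L0 * C0" using mb cC by (intro mult_mono) auto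
  finally show ?thesis unfolding L0_def C0_def S0_def by simp
qed

end


theorem lemma2p7:
  fixes G :: "('g, 'm) monoid_scheme"
    and \<phi> :: "'g \<Rightarrow> 'b \<Rightarrow> 'b" and ET :: "'b \<Rightarrow> 'b \<Rightarrow> bool"
    and \<psi> :: "'g \<Rightarrow> 'a \<Rightarrow> 'a" and EXg :: "'a \<Rightarrow> 'a \<Rightarrow> bool"
    and \<pi> :: "'a \<Rightarrow> ('b \<Rightarrow> real)"
    and \<kappa> :: nat and g0 h0 :: 'g and \<epsilon> :: real
  assumes "group G" and "torsion_free G"
    and "simplicial_tree ET" and "graph_aut_action G \<phi> ET" and "acylindrical G \<phi> ET \<kappa>"
    and "sym_graph EXg" and "gconnected EXg" and "graph_aut_action G \<psi> EXg"
    and "\<forall>x. \<pi> x \<in> realization ET"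
    and "\<forall>x y. tdist ET (\<pi> x) (\<pi> y) \<le> real (gdist EXg x y)"
    and "\<forall>g\<in>carrier G. \<forall>x. \<pi> (\<psi> g x) = act_pt G \<phi> g (\<pi> x)"
    and "g0 \<in> carrier G" and "h0 \<in> carrier G"
    and "\<epsilon> > 0"
  shows "\<exists>K::real. \<forall>g h k1 k2 \<alpha>g \<alpha>h x0 y0.
     k1 \<in> carrier G \<and> k2 \<in> carrier G \<and>
     g = k1 \<otimes>\<^bsub>G\<^esub> g0 \<otimes>\<^bsub>G\<^esub> inv\<^bsub>G\<^esub> k1 \<and>
     h = k2 \<otimes>\<^bsub>G\<^esub> h0 \<otimes>\<^bsub>G\<^esub> inv\<^bsub>G\<^esub> k2 \<and>
     loxodromic G \<phi> ET g \<and> loxodromic G \<phi> ET h \<and>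
     is_axis G \<phi> ET g \<alpha>g \<and> is_axis G \<phi> ET h \<alpha>h \<and>
     \<not> (\<exists>(m::int) (n::int). g [^]\<^bsub>G\<^esub> m = h [^]\<^bsub>G\<^esub> n \<and> g [^]\<^bsub>G\<^esub> m \<noteq> \<one>\<^bsub>G\<^esub>) \<and>
     \<pi> x0 \<in> \<alpha>g \<and>
     (\<forall>x. \<pi> x \<in> \<alpha>g \<longrightarrow> gdist EXg (\<psi> g x0) x0 \<le> gdist EXg (\<psi> g x) x) \<and>
     \<pi> y0 \<in> \<alpha>h
     \<longrightarrow> graph_diam EXg
           {y \<in> {\<psi> (h [^]\<^bsub>G\<^esub> n) y0 | n :: int. True}.
              \<exists>a \<in> {\<psi> (g [^]\<^bsub>G\<^esub> n) x0 | n :: int. True}. real (gdist EXg y a) \<le> \<epsilon>}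
         \<le> ereal K"
proof -
  interpret M: mainctx G \<phi> ET \<psi> EXg \<pi> \<kappa>
    using assms unfolding mainctx_def by blast
  define K where "K = 2 * \<epsilon> +
     (2 * \<epsilon> + 2 * (real (gdist EXg (\<psi> g0 (SOME x. \<exists>Al. is_axis G \<phi> ET g0 Al \<and> \<pi> x \<in> Al))
                                        (SOME x. \<exists>Al. is_axis G \<phi> ET g0 Al \<and> \<pi> x \<in> Al))
           * tdist ET (SOME P. \<exists>Al. is_axis G \<phi> ET h0 Al \<and> P \<in> Al)
                  (act_pt G \<phi> h0 (SOME P. \<exists>Al. is_axis G \<phi> ET h0 Al \<and> P \<in> Al))) + real \<kappa> + 4)
     * real (gdist EXg (\<psi> g0 (SOME x. \<exists>Al. is_axis G \<phi> ET g0 Al \<and> \<pi> x \<in> Al))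
                                        (SOME x. \<exists>Al. is_axis G \<phi> ET g0 Al \<and> \<pi> x \<in> Al))"
  show ?thesis
  proof (intro exI[of _ K] allI impI)
    fix g h k1 k2 \<alpha>g \<alpha>h x0 y0
    assume H: "k1 \<in> carrier G \<and> k2 \<in> carrier G \<and>
     g = k1 \<otimes>\<^bsub>G\<^esub> g0 \<otimes>\<^bsub>G\<^esub> inv\<^bsub>G\<^esub> k1 \<and>
     h = k2 \<otimes>\<^bsub>G\<^esub> h0 \<otimes>\<^bsub>G\<^esub> inv\<^bsub>G\<^esub> k2 \<and>
     loxodromic G \<phi> ET g \<and> loxodromic G \<phi> ET h \<and>
     is_axis G \<phi> ET g \<alpha>g \<and> is_axis G \<phi> ET h \<alpha>h \<and>
     \<not> (\<exists>(m::int) (n::int). g [^]\<^bsub>G\<^esub> m = h [^]\<^bsub>G\<^esub> n \<and> g [^]\<^bsub>G\<^esub> m \<noteq> \<one>\<^bsub>G\<^esub>) \<and>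
     \<pi> x0 \<in> \<alpha>g \<and>
     (\<forall>x. \<pi> x \<in> \<alpha>g \<longrightarrow> gdist EXg (\<psi> g x0) x0 \<le> gdist EXg (\<psi> g x) x) \<and>
     \<pi> y0 \<in> \<alpha>h"
    have k1: "k1 \<in> carrier G" and k2: "k2 \<in> carrier G"
      and gdef: "g = k1 \<otimes>\<^bsub>G\<^esub> g0 \<otimes>\<^bsub>G\<^esub> inv\<^bsub>G\<^esub> k1"
      and hdef: "h = k2 \<otimes>\<^bsub>G\<^esub> h0 \<otimes>\<^bsub>G\<^esub> inv\<^bsub>G\<^esub> k2"
      and lxg: "loxodromic G \<phi> ET g" and lxh: "loxodromic G \<phi> ET h"
      and axg: "is_axis G \<phi> ET g \<alpha>g" and axh: "is_axis G \<phi> ET h \<alpha>h"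
      and ncp: "\<not> (\<exists>(m::int) (n::int). g [^]\<^bsub>G\<^esub> m = h [^]\<^bsub>G\<^esub> n \<and> g [^]\<^bsub>G\<^esub> m \<noteq> \<one>\<^bsub>G\<^esub>)"
      and x0: "\<pi> x0 \<in> \<alpha>g"
      and xmin: "\<forall>x. \<pi> x \<in> \<alpha>g \<longrightarrow> gdist EXg (\<psi> g x0) x0 \<le> gdist EXg (\<psi> g x) x"
      and y0: "\<pi> y0 \<in> \<alpha>h"
      using H by blast+
    show "graph_diam EXg
           {y \<in> {\<psi> (h [^]\<^bsub>G\<^esub> n) y0 | n :: int. True}.
              \<exists>a \<in> {\<psi> (g [^]\<^bsub>G\<^esub> n) x0 | n :: int. True}. real (gdist EXg y a) \<le> \<epsilon>}
         \<le> ereal K"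
      unfolding graph_diam_def
    proof (rule SUP_least, rule SUP_least)
      fix y1 y2
      assume Y1: "y1 \<in> {y \<in> {\<psi> (h [^]\<^bsub>G\<^esub> n) y0 | n :: int. True}.
              \<exists>a \<in> {\<psi> (g [^]\<^bsub>G\<^esub> n) x0 | n :: int. True}. real (gdist EXg y a) \<le> \<epsilon>}"
        and Y2: "y2 \<in> {y \<in> {\<psi> (h [^]\<^bsub>G\<^esub> n) y0 | n :: int. True}.
              \<exists>a \<in> {\<psi> (g [^]\<^bsub>G\<^esub> n) x0 | n :: int. True}. real (gdist EXg y a) \<le> \<epsilon>}"
      obtain n1 m1 :: int where y1: "y1 = \<psi> (h [^]\<^bsub>G\<^esub> n1) y0"
        and a1: "real (gdist EXg y1 (\<psi> (g [^]\<^bsub>G\<^esub> m1) x0)) \<le> \<epsilon>" using Y1 by blast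
      obtain n2 m2 :: int where y2: "y2 = \<psi> (h [^]\<^bsub>G\<^esub> n2) y0"
        and a2: "real (gdist EXg y2 (\<psi> (g [^]\<^bsub>G\<^esub> m2) x0)) \<le> \<epsilon>" using Y2 by blast
      have "real (gdist EXg y1 y2) \<le> K"
        using M.pair_bound[OF assms(12) assms(13) k1 k2 gdef hdef lxg lxh axg axh ncp x0 xmin y0 y1 a1 y2 a2]
        unfolding K_def by simp
      then show "ereal (real (gdist EXg y1 y2)) \<le> ereal K" by simp
    qed
  qed
qed

end
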